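(* Let $K$ be an algebraically closed field of characteristic $0$, $m\le n$, and $0\le v\le t$. Then the assignments $$\theta:[I\,|\,J]_X\mapsto\begin{cases}[I^-\,|\,J^-]_{X'},&\{1,\dots,v\}\subseteq I\text{ and }\{1,\dots,v\}\subseteq J,\\0,&\text{otherwise},\end{cases}\qquad \psi:[L\,|\,M]_{X'}\mapsto[L^+\,|\,M^+]_X$$ induce well-defined $K$-algebra homomorphisms $\theta:A_t(m,n)\to A_{t-v}(m-v,n-v)$ and $\psi:A_{t-v}(m-v,n-v)\to A_t(m,n)$ with $\theta\circ\psi=\mathrm{id}$; thus $A_{t-v}(m-v,n-v)$ is a retract of $A_t(m,n)$. More generally, if $t'\le t$, $m'\le m$, $n'\le n$ satisfy $m-m'\ge t-t'$ and $n-n'\ge t-t'$, then $A_{t'}(m',n')$ is a retract of $A_t(m,n)$ (there are $K$-algebra homomorphisms $\iota:A_{t'}(m',n')\to A_t(m,n)$ and $\rho:A_t(m,n)\to A_{t'}(m',n')$ with $\rho\circ\iota=\mathrm{id}$).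
   Context: For integers $s,p,q$, $A_s(p,q)$ is the $K$-subalgebra of the polynomial ring in the entries of a $p\times q$ matrix of indeterminates generated by all $s$-minors. Here $X$ is an $m\times n$ and $X'$ an $(m-v)\times(n-v)$ matrix of indeterminates; $[I\,|\,J]_X$ denotes the minor of $X$ with row index set $I$ and column index set $J$ ($|I|=|J|=t$). For $I=\{i_1<\dots<i_t\}$ containing $\{1,\dots,v\}$, $I^-=\{i_{v+1}-v,\dots,i_t-v\}$; for $L=\{l_1<\dots<l_{t-v}\}$, $L^+=\{1,\dots,v\}\cup\{l_1+v,\dots,l_{t-v}+v\}$; similarly for $J^-$, $M^+$. *)

theory Defs
  imports "HOL-Library.Poly_Mapping" "HOL-Combinatorics.Permutations"
          "HOL-Computational_Algebra.Polynomial"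
begin

text \<open>Polynomial ring K[x_ij : i,j \<ge> 1] over K, realised as finitely supported
  functions from monomials (finitely supported exponent vectors indexed by (i,j)) to K.
  The polynomial ring in the entries of a p x q matrix is the subring of polynomials
  in the variables x_ij with 1 \<le> i \<le> p, 1 \<le> j \<le> q; all algebras A_s(p,q)
  are subalgebras of this ambient ring.\<close>

type_synonym 'a mpoly = "((nat \<times> nat) \<Rightarrow>\<^sub>0 nat) \<Rightarrow>\<^sub>0 'a"

definition const_mp :: "'a::comm_ring_1 \<Rightarrow> 'a mpoly" where
  "const_mp c = Poly_Mapping.single 0 c"

definition var_mp :: "nat \<Rightarrow> nat \<Rightarrow> 'a::comm_ring_1 mpoly" where
  "var_mp i j = Poly_Mapping.single (Poly_Mapping.single (i, j) 1) 1"

definition minor :: "nat set \<Rightarrow> nat set \<Rightarrow> 'a::comm_ring_1 mpoly" where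
  "minor I J = (\<Sum>\<pi> \<in> {\<pi>. \<pi> permutes {0..<card I}}.
      of_int (sign \<pi>) * (\<Prod>k<card I. var_mp (sorted_list_of_set I ! k) (sorted_list_of_set J ! \<pi> k)))"

inductive_set subalg :: "'a::comm_ring_1 mpoly set \<Rightarrow> 'a mpoly set" for S where
  gen: "x \<in> S \<Longrightarrow> x \<in> subalg S"
| const: "const_mp c \<in> subalg S"
| add: "x \<in> subalg S \<Longrightarrow> y \<in> subalg S \<Longrightarrow> x + y \<in> subalg S"
| mult: "x \<in> subalg S \<Longrightarrow> y \<in> subalg S \<Longrightarrow> x * y \<in> subalg S"

text \<open>The set of s-minors of the p x q matrix of indeterminates (indices start at 1).\<close>
definition minors :: "nat \<Rightarrow> nat \<Rightarrow> nat \<Rightarrow> 'a::comm_ring_1 mpoly set" where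
  "minors s p q = {minor I J | I J. I \<subseteq> {1..p} \<and> J \<subseteq> {1..q} \<and> card I = s \<and> card J = s}"

definition A_alg :: "nat \<Rightarrow> nat \<Rightarrow> nat \<Rightarrow> 'a::comm_ring_1 mpoly set" where
  "A_alg s p q = subalg (minors s p q)"

definition alg_hom :: "('a::comm_ring_1 mpoly \<Rightarrow> 'a mpoly) \<Rightarrow> 'a mpoly set \<Rightarrow> 'a mpoly set \<Rightarrow> bool" where
  "alg_hom f A B \<longleftrightarrow> (\<forall>x\<in>A. f x \<in> B)
     \<and> (\<forall>x\<in>A. \<forall>y\<in>A. f (x + y) = f x + f y)
     \<and> (\<forall>x\<in>A. \<forall>y\<in>A. f (x * y) = f x * f y)
     \<and> (\<forall>c. \<forall>x\<in>A. f (const_mp c * x) = const_mp c * f x)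
     \<and> f 1 = 1"

definition shift_down :: "nat \<Rightarrow> nat set \<Rightarrow> nat set" where
  "shift_down v I = (\<lambda>i. i - v) ` {i \<in> I. v < i}"

definition shift_up :: "nat \<Rightarrow> nat set \<Rightarrow> nat set" where
  "shift_up v L = {1..v} \<union> (\<lambda>l. l + v) ` L"

definition alg_closed :: "'a::field itself \<Rightarrow> bool" where
  "alg_closed _ \<longleftrightarrow> (\<forall>p::'a poly. 0 < degree p \<longrightarrow> (\<exists>x. poly p x = 0))"

end

theory Submission
  imports Defs "Jordan_Normal_Form.Determinant" "HOL-Library.Product_Lexorder"
begin

section \<open>Evaluation of polynomials\<close>

definition mono_ev :: "('v \<Rightarrow> 'b::comm_semiring_1) \<Rightarrow> ('v \<Rightarrow>\<^sub>0 nat) \<Rightarrow> 'b" where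
  "mono_ev \<sigma> \<mu> = (\<Prod>x\<in>Poly_Mapping.keys \<mu>. \<sigma> x ^ Poly_Mapping.lookup \<mu> x)"

lemma mono_ev_superset:
  assumes "finite S" "Poly_Mapping.keys \<mu> \<subseteq> S"
  shows "mono_ev \<sigma> \<mu> = (\<Prod>x\<in>S. \<sigma> x ^ Poly_Mapping.lookup \<mu> x)"
  unfolding mono_ev_def
  by (rule prod.mono_neutral_left) (use assms in \<open>auto simp: in_keys_iff\<close>)

lemma mono_ev_add: "mono_ev \<sigma> (\<mu> + \<nu>) = mono_ev \<sigma> \<mu> * mono_ev \<sigma> \<nu>"
proof -
  let ?S = "Poly_Mapping.keys \<mu> \<union> Poly_Mapping.keys \<nu>"
  have "mono_ev \<sigma> (\<mu> + \<nu>) = (\<Prod>x\<in>?S. \<sigma> x ^ Poly_Mapping.lookup (\<mu> + \<nu>) x)"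
    by (rule mono_ev_superset) (auto dest: keys_add[THEN subsetD])
  also have "\<dots> = (\<Prod>x\<in>?S. \<sigma> x ^ Poly_Mapping.lookup \<mu> x * \<sigma> x ^ Poly_Mapping.lookup \<nu> x)"
    by (simp add: lookup_add power_add)
  also have "\<dots> = mono_ev \<sigma> \<mu> * mono_ev \<sigma> \<nu>"
    by (simp add: prod.distrib mono_ev_superset[of ?S])
  finally show ?thesis .
qed

lemma mono_ev_0[simp]: "mono_ev \<sigma> 0 = 1"
  by (simp add: mono_ev_def)

lemma mono_ev_single[simp]: "mono_ev \<sigma> (Poly_Mapping.single x k) = \<sigma> x ^ k"
  by (simp add: mono_ev_def)

lemma mono_ev_cong: "(\<And>x. x \<in> Poly_Mapping.keys \<mu> \<Longrightarrow> \<sigma> x = \<tau> x) \<Longrightarrow> mono_ev \<sigma> \<mu> = mono_ev \<tau> \<mu>"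
  by (simp add: mono_ev_def)

lemma mono_ev_zero: "x \<in> Poly_Mapping.keys \<mu> \<Longrightarrow> \<sigma> x = 0 \<Longrightarrow> mono_ev \<sigma> \<mu> = (0::'b::comm_semiring_1)"
  unfolding mono_ev_def
  by (rule prod_zero) (auto simp: in_keys_iff power_0_left intro!: bexI[of _ x])

lemma mono_ev_scale: "mono_ev (\<lambda>x. c * \<sigma> x) \<mu> = c ^ (\<Sum>x\<in>Poly_Mapping.keys \<mu>. Poly_Mapping.lookup \<mu> x) * mono_ev \<sigma> \<mu>"
  by (simp add: mono_ev_def power_mult_distrib prod.distrib power_sum)

lemma const_mp_add: "const_mp (a + b) = const_mp a + const_mp b"
  by (simp add: const_mp_def single_add)
lemma const_mp_mult: "const_mp (a * b) = const_mp a * const_mp b"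
  by (simp add: const_mp_def mult_single)
lemma const_mp_0[simp]: "const_mp 0 = 0"
  by (simp add: const_mp_def)
lemma const_mp_1[simp]: "const_mp 1 = 1"
  by (simp add: const_mp_def)
lemma const_mp_uminus: "const_mp (- a) = - const_mp a"
  by (simp add: const_mp_def single_uminus)

definition ev :: "('v \<Rightarrow> 'a::comm_ring_1 mpoly) \<Rightarrow> (('v \<Rightarrow>\<^sub>0 nat) \<Rightarrow>\<^sub>0 'a) \<Rightarrow> 'a mpoly" where
  "ev \<sigma> p = (\<Sum>\<mu>\<in>Poly_Mapping.keys p. const_mp (Poly_Mapping.lookup p \<mu>) * mono_ev \<sigma> \<mu>)"

lemma ev_add: "ev \<sigma> (p + q) = ev \<sigma> p + ev \<sigma> q"
  unfolding ev_def
  by (rule setsum_keys_plus_distrib) (simp_all add: const_mp_add distrib_right)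

lemma ev_0[simp]: "ev \<sigma> 0 = 0"
  by (simp add: ev_def)

lemma ev_single[simp]: "ev \<sigma> (Poly_Mapping.single \<mu> c) = const_mp c * mono_ev \<sigma> \<mu>"
  by (simp add: ev_def)

lemma ev_sum: "ev \<sigma> (sum f A) = (\<Sum>x\<in>A. ev \<sigma> (f x))"
  by (induction A rule: infinite_finite_induct) (simp_all add: ev_add)


lemma poly_expand: "p = (\<Sum>\<mu>\<in>Poly_Mapping.keys p. Poly_Mapping.single \<mu> (Poly_Mapping.lookup p \<mu>))"
  by (rule poly_mapping_eqI) (auto simp: lookup_sum lookup_single when_def in_keys_iff)

lemma ev_mult: "ev \<sigma> (p * q) = ev \<sigma> p * ev \<sigma> q"
proof -
  have "p * q = (\<Sum>\<mu>\<in>Poly_Mapping.keys p. \<Sum>\<nu>\<in>Poly_Mapping.keys q.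
      Poly_Mapping.single (\<mu> + \<nu>) (Poly_Mapping.lookup p \<mu> * Poly_Mapping.lookup q \<nu>))"
    apply (subst poly_expand[of p], subst poly_expand[of q])
    by (simp add: sum_distrib_left sum_distrib_right mult_single sum.swap[where A="Poly_Mapping.keys q"])
  then have "ev \<sigma> (p * q) = (\<Sum>\<mu>\<in>Poly_Mapping.keys p. \<Sum>\<nu>\<in>Poly_Mapping.keys q.
      const_mp (Poly_Mapping.lookup p \<mu>) * mono_ev \<sigma> \<mu> * (const_mp (Poly_Mapping.lookup q \<nu>) * mono_ev \<sigma> \<nu>))"
    by (simp add: ev_sum mono_ev_add const_mp_mult ac_simps)
  also have "\<dots> = ev \<sigma> p * ev \<sigma> q"
    by (simp add: ev_def sum_distrib_left sum_distrib_right) (rule sum.swap)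
  finally show ?thesis .
qed

lemma ev_1[simp]: "ev \<sigma> 1 = 1"
  using ev_single[of \<sigma> 0 1] by (simp del: ev_single)

lemma ev_const[simp]: "ev \<sigma> (const_mp c) = const_mp c"
  by (simp add: const_mp_def)

definition zvar :: "'v \<Rightarrow> ('v \<Rightarrow>\<^sub>0 nat) \<Rightarrow>\<^sub>0 'a::comm_ring_1" where
  "zvar z = Poly_Mapping.single (Poly_Mapping.single z 1) 1"

lemma ev_zvar[simp]: "ev \<sigma> (zvar z) = \<sigma> z"
  by (simp add: zvar_def)

lemma ev_prod: "ev \<sigma> (prod f A) = (\<Prod>x\<in>A. ev \<sigma> (f x))"
  by (induction A rule: infinite_finite_induct) (simp_all add: ev_mult)

lemma ev_power: "ev \<sigma> (p ^ k) = ev \<sigma> p ^ k"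
  by (induction k) (simp_all add: ev_mult)

lemma ev_of_int: "ev \<sigma> (of_int k) = of_int k"
proof -
  have *: "(of_int k :: ('v \<Rightarrow>\<^sub>0 nat) \<Rightarrow>\<^sub>0 'a) = Poly_Mapping.single 0 (of_int k)"
    by simp
  show ?thesis by (simp only: * ev_single mono_ev_0 mult_1_right) (simp add: const_mp_def)
qed

interpretation ev_hom: comm_ring_hom "ev \<sigma>"
  by unfold_locales (simp_all add: ev_add ev_mult)

lemma ev_uminus: "ev \<sigma> (- p) = - ev \<sigma> p"
  by (rule ev_hom.hom_uminus)

lemma ev_diff: "ev \<sigma> (p - q) = ev \<sigma> p - ev \<sigma> q"
  by (rule ev_hom.hom_minus)

lemma ev_mono_ev: "ev \<tau> (mono_ev \<sigma> \<mu>) = mono_ev (\<lambda>x. ev \<tau> (\<sigma> x)) \<mu>"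
  by (simp add: mono_ev_def ev_prod ev_power)

lemma ev_ev: "ev \<tau> (ev \<sigma> p) = ev (\<lambda>x. ev \<tau> (\<sigma> x)) p"
  unfolding ev_def[of \<sigma> p] ev_def[of "\<lambda>x. ev \<tau> (\<sigma> x)" p]
  by (simp add: ev_sum ev_mult ev_mono_ev)

lemma ev_cong: "(\<And>\<mu> x. \<mu> \<in> Poly_Mapping.keys p \<Longrightarrow> x \<in> Poly_Mapping.keys \<mu> \<Longrightarrow> \<sigma> x = \<tau> x) \<Longrightarrow> ev \<sigma> p = ev \<tau> p"
  unfolding ev_def by (intro sum.cong refl arg_cong[where f="\<lambda>x. _ * x"] mono_ev_cong) auto


lemma subalg_zero[simp]: "0 \<in> subalg S"
  using subalg.const[of 0 S] by simp
lemma subalg_one[simp]: "1 \<in> subalg S"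
  using subalg.const[of 1 S] by simp

lemma subalg_sum: "(\<And>x. x \<in> A \<Longrightarrow> f x \<in> subalg S) \<Longrightarrow> sum f A \<in> subalg S"
  by (induction A rule: infinite_finite_induct) (auto intro: subalg.add)
lemma subalg_prod: "(\<And>x. x \<in> A \<Longrightarrow> f x \<in> subalg S) \<Longrightarrow> prod f A \<in> subalg S"
  by (induction A rule: infinite_finite_induct) (auto intro: subalg.mult)
lemma subalg_power: "x \<in> subalg S \<Longrightarrow> x ^ k \<in> subalg S"
  by (induction k) (auto intro: subalg.mult)

lemma subalg_mono: "X \<subseteq> subalg S \<Longrightarrow> subalg X \<subseteq> subalg S"
proof
  fix x assume X: "X \<subseteq> subalg S" and x: "x \<in> subalg X"
  from x show "x \<in> subalg S"
    by (induction rule: subalg.induct) (use X in \<open>auto intro: subalg.intros\<close>)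
qed

lemma subalg_mono_ev:
  "(\<And>x. x \<in> Poly_Mapping.keys \<mu> \<Longrightarrow> \<sigma> x \<in> subalg S) \<Longrightarrow> mono_ev \<sigma> \<mu> \<in> subalg S"
  unfolding mono_ev_def by (intro subalg_prod subalg_power) auto

lemma subalg_ev:
  "(\<And>\<mu> x. \<mu> \<in> Poly_Mapping.keys F \<Longrightarrow> x \<in> Poly_Mapping.keys \<mu> \<Longrightarrow> \<sigma> x \<in> subalg S) \<Longrightarrow> ev \<sigma> F \<in> subalg S"
  unfolding ev_def by (intro subalg_sum subalg.mult subalg.const subalg_mono_ev) auto

lemma alg_hom_add: "alg_hom f A B \<Longrightarrow> x \<in> A \<Longrightarrow> y \<in> A \<Longrightarrow> f (x + y) = f x + f y"
  by (simp add: alg_hom_def)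
lemma alg_hom_mult: "alg_hom f A B \<Longrightarrow> x \<in> A \<Longrightarrow> y \<in> A \<Longrightarrow> f (x * y) = f x * f y"
  by (simp add: alg_hom_def)
lemma alg_hom_in: "alg_hom f A B \<Longrightarrow> x \<in> A \<Longrightarrow> f x \<in> B"
  by (simp add: alg_hom_def)
lemma alg_hom_one: "alg_hom f A B \<Longrightarrow> f 1 = 1"
  by (simp add: alg_hom_def)
lemma alg_hom_const: "alg_hom f A B \<Longrightarrow> 1 \<in> A \<Longrightarrow> f (const_mp c) = const_mp c"
  unfolding alg_hom_def by (metis mult.right_neutral)
lemma alg_hom_zero: "alg_hom f A B \<Longrightarrow> 1 \<in> A \<Longrightarrow> f 0 = 0"
  using alg_hom_const[of f A B 0] by simp
lemma alg_hom_smult: "alg_hom f A B \<Longrightarrow> x \<in> A \<Longrightarrow> f (const_mp c * x) = const_mp c * f x"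
  by (simp add: alg_hom_def)

lemma alg_hom_sum:
  assumes "alg_hom f (subalg S) B" "\<And>x. x \<in> A \<Longrightarrow> g x \<in> subalg S"
  shows "f (sum g A) = (\<Sum>x\<in>A. f (g x))"
  using assms(2)
proof (induction A rule: infinite_finite_induct)
  case (infinite A) then show ?case using alg_hom_zero[OF assms(1)] by simp
next
  case empty then show ?case using alg_hom_zero[OF assms(1)] by simp
next
  case (insert x F)
  then show ?case by (simp add: alg_hom_add[OF assms(1)] subalg_sum)
qed

lemma alg_hom_prod:
  assumes "alg_hom f (subalg S) B" "\<And>x. x \<in> A \<Longrightarrow> g x \<in> subalg S"
  shows "f (prod g A) = (\<Prod>x\<in>A. f (g x))"
  using assms(2)
proof (induction A rule: infinite_finite_induct)
  case (infinite A) then show ?case using alg_hom_one[OF assms(1)] by simp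
next
  case empty then show ?case using alg_hom_one[OF assms(1)] by simp
next
  case (insert x F)
  then show ?case by (simp add: alg_hom_mult[OF assms(1)] subalg_prod)
qed

lemma alg_hom_power:
  assumes "alg_hom f (subalg S) B" "x \<in> subalg S"
  shows "f (x ^ k) = f x ^ k"
  by (induction k) (simp_all add: alg_hom_one[OF assms(1)] alg_hom_mult[OF assms(1)] assms(2) subalg_power)

lemma alg_hom_ev:
  assumes f: "alg_hom f (subalg S) B"
    and vals: "\<And>\<mu> x. \<mu> \<in> Poly_Mapping.keys F \<Longrightarrow> x \<in> Poly_Mapping.keys \<mu> \<Longrightarrow> \<sigma> x \<in> subalg S"
  shows "f (ev \<sigma> F) = ev (\<lambda>x. f (\<sigma> x)) F"
proof -
  have m: "f (mono_ev \<sigma> \<mu>) = mono_ev (\<lambda>x. f (\<sigma> x)) \<mu>" if "\<mu> \<in> Poly_Mapping.keys F" for \<mu>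
    unfolding mono_ev_def
    by (subst alg_hom_prod[OF f]) (auto intro!: prod.cong alg_hom_power[OF f] subalg_power vals that)
  show ?thesis
    unfolding ev_def
    by (subst alg_hom_sum[OF f])
      (auto intro!: sum.cong subalg.mult subalg.const subalg_mono_ev vals
        simp: alg_hom_smult[OF f] m subalg_mono_ev vals)
qed

lemma alg_hom_comp: "alg_hom f A B \<Longrightarrow> alg_hom g B C \<Longrightarrow> alg_hom (g \<circ> f) A C"
  unfolding alg_hom_def by auto

lemma alg_hom_subset: "alg_hom f A B \<Longrightarrow> A' \<subseteq> A \<Longrightarrow> alg_hom f A' B"
  unfolding alg_hom_def by blast

lemma alg_hom_target: "alg_hom f A B \<Longrightarrow> B \<subseteq> B' \<Longrightarrow> alg_hom f A B'"
  unfolding alg_hom_def by blast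

lemma retract_subalg:
  assumes psi: "alg_hom \<psi> (subalg G) A" and th: "alg_hom \<theta> A C" and one: "1 \<in> A"
    and gen: "\<And>g. g \<in> G \<Longrightarrow> \<theta> (\<psi> g) = g"
    and a: "a \<in> subalg G"
  shows "\<theta> (\<psi> a) = a"
  using a
proof (induction a rule: subalg.induct)
  case (gen x) then show ?case using assms by simp
next
  case (const c) then show ?case
    by (simp add: alg_hom_const[OF psi] alg_hom_const[OF th one])
next
  case (add x y) then show ?case
    by (simp add: alg_hom_add[OF psi] alg_hom_add[OF th] alg_hom_in[OF psi])
next
  case (mult x y) then show ?case
    by (simp add: alg_hom_mult[OF psi] alg_hom_mult[OF th] alg_hom_in[OF psi])
qed

section \<open>Well-defined homomorphisms from presentations\<close>

definition vpolys :: "'v set \<Rightarrow> (('v \<Rightarrow>\<^sub>0 nat) \<Rightarrow>\<^sub>0 'a::comm_ring_1) set" where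
  "vpolys Z = {F. \<forall>\<mu>\<in>Poly_Mapping.keys F. Poly_Mapping.keys \<mu> \<subseteq> Z}"

lemma vpolys_add: "F \<in> vpolys Z \<Longrightarrow> G \<in> vpolys Z \<Longrightarrow> F + G \<in> vpolys Z"
  unfolding vpolys_def by (auto dest!: keys_add[THEN subsetD])
lemma vpolys_uminus: "F \<in> vpolys Z \<Longrightarrow> - F \<in> vpolys Z"
  unfolding vpolys_def by (simp add: keys_minus)
lemma vpolys_diff: "F \<in> vpolys Z \<Longrightarrow> G \<in> vpolys Z \<Longrightarrow> F - G \<in> vpolys Z"
  using vpolys_add[of F Z "-G"] vpolys_uminus[of G Z] by simp
lemma vpolys_mult: "F \<in> vpolys Z \<Longrightarrow> G \<in> vpolys Z \<Longrightarrow> F * G \<in> vpolys Z"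
  unfolding vpolys_def
proof safe
  fix x \<mu> assume F: "\<forall>\<mu>\<in>Poly_Mapping.keys F. Poly_Mapping.keys \<mu> \<subseteq> Z"
    and G: "\<forall>\<mu>\<in>Poly_Mapping.keys G. Poly_Mapping.keys \<mu> \<subseteq> Z"
    and \<mu>: "\<mu> \<in> Poly_Mapping.keys (F * G)" and x: "x \<in> Poly_Mapping.keys \<mu>"
  from keys_mult[of F G] \<mu> obtain a b where "\<mu> = a + b" "a \<in> Poly_Mapping.keys F" "b \<in> Poly_Mapping.keys G"
    by blast
  with F G x keys_add[of a b] show "x \<in> Z" by blast
qed
lemma vpolys_single0: "Poly_Mapping.single 0 c \<in> vpolys Z"
  unfolding vpolys_def by simp
lemma vpolys_zvar: "z \<in> Z \<Longrightarrow> zvar z \<in> vpolys Z"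
  unfolding vpolys_def zvar_def by simp
lemma vpolys_0: "0 \<in> vpolys Z"
  unfolding vpolys_def by simp

lemma rep_exists:
  assumes "f \<in> subalg (vals ` Z)"
  shows "\<exists>F\<in>vpolys Z. ev vals F = f"
  using assms
proof (induction f rule: subalg.induct)
  case (gen x)
  then obtain z where "z \<in> Z" "x = vals z" by auto
  then show ?case by (intro bexI[of _ "zvar z"]) (simp_all add: vpolys_zvar)
next
  case (const c)
  show ?case by (intro bexI[of _ "Poly_Mapping.single 0 c"]) (simp_all add: vpolys_single0 const_mp_def)
next
  case (add x y)
  then obtain F G where "F \<in> vpolys Z" "ev vals F = x" "G \<in> vpolys Z" "ev vals G = y" by blast
  then show ?case by (intro bexI[of _ "F + G"]) (simp_all add: ev_add vpolys_add)
next
  case (mult x y)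
  then obtain F G where "F \<in> vpolys Z" "ev vals F = x" "G \<in> vpolys Z" "ev vals G = y" by blast
  then show ?case by (intro bexI[of _ "F * G"]) (simp_all add: ev_mult vpolys_mult)
qed

definition WD :: "('v \<Rightarrow> 'a::comm_ring_1 mpoly) \<Rightarrow> ('v \<Rightarrow> 'a mpoly) \<Rightarrow> 'v set \<Rightarrow> bool" where
  "WD vals0 vals1 Z \<longleftrightarrow> (\<forall>F\<in>vpolys Z. ev vals0 F = 0 \<longrightarrow> ev vals1 F = 0)"

definition wdhom :: "('v \<Rightarrow> 'a::comm_ring_1 mpoly) \<Rightarrow> ('v \<Rightarrow> 'a mpoly) \<Rightarrow> 'v set \<Rightarrow> 'a mpoly \<Rightarrow> 'a mpoly" where
  "wdhom vals0 vals1 Z f = ev vals1 (SOME F. F \<in> vpolys Z \<and> ev vals0 F = f)"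

lemma wdhom_eq:
  assumes wd: "WD vals0 vals1 Z" and F: "F \<in> vpolys Z"
  shows "wdhom vals0 vals1 Z (ev vals0 F) = ev vals1 F"
proof -
  let ?G = "SOME G. G \<in> vpolys Z \<and> ev vals0 G = ev vals0 F"
  have G: "?G \<in> vpolys Z \<and> ev vals0 ?G = ev vals0 F"
    by (rule someI[of _ F]) (simp add: F)
  then have "ev vals0 (?G - F) = 0" by (simp add: ev_diff)
  moreover have "?G - F \<in> vpolys Z" using G F by (simp add: vpolys_diff)
  ultimately have "ev vals1 (?G - F) = 0" using wd unfolding WD_def by blast
  then show ?thesis unfolding wdhom_def by (simp add: ev_diff)
qed

lemma wdhom_alg_hom:
  assumes wd: "WD vals0 vals1 Z"
  shows "alg_hom (wdhom vals0 vals1 Z) (subalg (vals0 ` Z)) (subalg (vals1 ` Z))"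
  unfolding alg_hom_def
proof (intro conjI ballI allI)
  fix x assume "x \<in> subalg (vals0 ` Z)"
  then obtain F where F: "F \<in> vpolys Z" "ev vals0 F = x" using rep_exists by blast
  show "wdhom vals0 vals1 Z x \<in> subalg (vals1 ` Z)"
  proof -
    have "ev vals1 F \<in> subalg (vals1`Z)"
      by (rule subalg_ev) (use F(1) in \<open>auto intro: subalg.gen simp: vpolys_def\<close>)
    then show ?thesis using F wdhom_eq[OF wd F(1)] by simp
  qed
  fix y assume "y \<in> subalg (vals0 ` Z)"
  then obtain G where G: "G \<in> vpolys Z" "ev vals0 G = y" using rep_exists by blast
  show "wdhom vals0 vals1 Z (x + y) = wdhom vals0 vals1 Z x + wdhom vals0 vals1 Z y"
    using wdhom_eq[OF wd F(1)] wdhom_eq[OF wd G(1)] wdhom_eq[OF wd vpolys_add[OF F(1) G(1)]] F G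
    by (simp add: ev_add)
  show "wdhom vals0 vals1 Z (x * y) = wdhom vals0 vals1 Z x * wdhom vals0 vals1 Z y"
    using wdhom_eq[OF wd F(1)] wdhom_eq[OF wd G(1)] wdhom_eq[OF wd vpolys_mult[OF F(1) G(1)]] F G
    by (simp add: ev_mult)
next
  fix c x assume "x \<in> subalg (vals0 ` Z)"
  then obtain F where F: "F \<in> vpolys Z" "ev vals0 F = x" using rep_exists by blast
  have c: "const_mp c = ev vals0 (Poly_Mapping.single 0 c)" "const_mp c = ev vals1 (Poly_Mapping.single 0 c)"
    by (simp_all add: const_mp_def)
  show "wdhom vals0 vals1 Z (const_mp c * x) = const_mp c * wdhom vals0 vals1 Z x"
    using wdhom_eq[OF wd F(1)] wdhom_eq[OF wd vpolys_mult[OF vpolys_single0 F(1)], of c] F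
    by (simp add: ev_mult const_mp_def)
next
  show "wdhom vals0 vals1 Z 1 = 1"
    using wdhom_eq[OF wd vpolys_single0[of 1 Z]] by simp
qed

lemma wdhom_gen:
  assumes wd: "WD vals0 vals1 Z" and z: "z \<in> Z"
  shows "wdhom vals0 vals1 Z (vals0 z) = vals1 z"
  using wdhom_eq[OF wd vpolys_zvar[OF z]] by simp

lemma WD_of_hom:
  assumes "\<And>z. z \<in> Z \<Longrightarrow> vals1 z = ev \<tau> (vals0 z)"
  shows "WD vals0 vals1 Z"
  unfolding WD_def
proof safe
  fix F :: "('a \<Rightarrow>\<^sub>0 nat) \<Rightarrow>\<^sub>0 'b" assume F: "F \<in> vpolys Z" "ev vals0 F = 0"
  have "ev vals1 F = ev (\<lambda>x. ev \<tau> (vals0 x)) F"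
    using F(1) assms by (intro ev_cong) (auto simp: vpolys_def)
  also have "\<dots> = ev \<tau> (ev vals0 F)" by (simp add: ev_ev)
  finally show "ev vals1 F = 0" using F(2) by simp
qed


section \<open>Gradings\<close>

definition wdeg :: "('v \<Rightarrow> nat) \<Rightarrow> ('v \<Rightarrow>\<^sub>0 nat) \<Rightarrow> nat" where
  "wdeg w \<mu> = (\<Sum>x\<in>Poly_Mapping.keys \<mu>. w x * Poly_Mapping.lookup \<mu> x)"

lemma wdeg_superset:
  assumes "finite S" "Poly_Mapping.keys \<mu> \<subseteq> S"
  shows "wdeg w \<mu> = (\<Sum>x\<in>S. w x * Poly_Mapping.lookup \<mu> x)"
  unfolding wdeg_def
  by (rule sum.mono_neutral_left) (use assms in \<open>auto simp: in_keys_iff\<close>)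

lemma wdeg_add: "wdeg w (\<mu> + \<nu>) = wdeg w \<mu> + wdeg w \<nu>"
proof -
  let ?S = "Poly_Mapping.keys \<mu> \<union> Poly_Mapping.keys \<nu>"
  have "wdeg w (\<mu> + \<nu>) = (\<Sum>x\<in>?S. w x * Poly_Mapping.lookup (\<mu> + \<nu>) x)"
    by (rule wdeg_superset) (auto dest: keys_add[THEN subsetD])
  also have "\<dots> = (\<Sum>x\<in>?S. w x * Poly_Mapping.lookup \<mu> x + w x * Poly_Mapping.lookup \<nu> x)"
    by (simp add: lookup_add distrib_left)
  also have "\<dots> = wdeg w \<mu> + wdeg w \<nu>"
    by (simp add: sum.distrib wdeg_superset[of ?S])
  finally show ?thesis .
qed

lemma wdeg_0[simp]: "wdeg w 0 = 0"
  by (simp add: wdeg_def)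

lemma wdeg_single[simp]: "wdeg w (Poly_Mapping.single x k) = w x * k"
  by (simp add: wdeg_def)

definition homog :: "('v \<Rightarrow> nat) \<Rightarrow> nat \<Rightarrow> (('v \<Rightarrow>\<^sub>0 nat) \<Rightarrow>\<^sub>0 'a::comm_ring_1) \<Rightarrow> bool" where
  "homog w g p \<longleftrightarrow> (\<forall>\<mu>\<in>Poly_Mapping.keys p. wdeg w \<mu> = g)"

lemma homogD: "homog w g p \<Longrightarrow> \<mu> \<in> Poly_Mapping.keys p \<Longrightarrow> wdeg w \<mu> = g"
  by (simp add: homog_def)

lemma homog_0[simp]: "homog w g 0"
  by (simp add: homog_def)

lemma homog_mult: "homog w a p \<Longrightarrow> homog w b q \<Longrightarrow> homog w (a + b) (p * q)"
  unfolding homog_def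
proof safe
  fix \<mu> assume p: "\<forall>\<mu>\<in>Poly_Mapping.keys p. wdeg w \<mu> = a" and q: "\<forall>\<mu>\<in>Poly_Mapping.keys q. wdeg w \<mu> = b"
    and \<mu>: "\<mu> \<in> Poly_Mapping.keys (p * q)"
  from keys_mult[of p q] \<mu> obtain x y where "\<mu> = x + y" "x \<in> Poly_Mapping.keys p" "y \<in> Poly_Mapping.keys q"
    by blast
  with p q show "wdeg w \<mu> = a + b" by (simp add: wdeg_add)
qed

lemma homog_add: "homog w a p \<Longrightarrow> homog w a q \<Longrightarrow> homog w a (p + q)"
  unfolding homog_def by (auto dest!: keys_add[THEN subsetD])

lemma homog_sum: "(\<And>x. x \<in> A \<Longrightarrow> homog w a (f x)) \<Longrightarrow> homog w a (sum f A)"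
  by (induction A rule: infinite_finite_induct) (auto intro: homog_add)

lemma homog_single0: "homog w 0 (Poly_Mapping.single 0 c)"
  by (simp add: homog_def)

lemma homog_1[simp]: "homog w 0 1"
  by (simp add: homog_def)

lemma homog_const: "homog w 0 (const_mp c)"
  by (simp add: const_mp_def homog_single0)

lemma homog_of_int: "homog w 0 (of_int k)"
  using homog_single0[of w "of_int k"] by simp

lemma homog_prod: "(\<And>x. x \<in> A \<Longrightarrow> homog w (g x) (f x)) \<Longrightarrow> homog w (sum g A) (prod f A)"
  by (induction A rule: infinite_finite_induct) (auto intro: homog_mult)

lemma homog_power: "homog w a p \<Longrightarrow> homog w (k * a) (p ^ k)"
  by (induction k) (auto dest: homog_mult)

lemma homog_var: "homog w (w (i, j)) (var_mp i j)"
  by (simp add: homog_def var_mp_def)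

lemma homog_mono_ev:
  assumes "\<And>z. z \<in> Poly_Mapping.keys \<zeta> \<Longrightarrow> homog w (g z) (vals z)"
  shows "homog w (\<Sum>z\<in>Poly_Mapping.keys \<zeta>. Poly_Mapping.lookup \<zeta> z * g z) (mono_ev vals \<zeta>)"
  unfolding mono_ev_def by (intro homog_prod homog_power assms)

lemma homog_minor:
  assumes "\<And>\<pi>. \<pi> permutes {0..<card I} \<Longrightarrow>
     (\<Sum>k<card I. w (sorted_list_of_set I ! k, sorted_list_of_set J ! \<pi> k)) = g"
  shows "homog w g (minor I J)"
  unfolding minor_def
proof (rule homog_sum)
  fix \<pi> assume "\<pi> \<in> {\<pi>. \<pi> permutes {0..<card I}}"
  then have g: "(\<Sum>k<card I. w (sorted_list_of_set I ! k, sorted_list_of_set J ! \<pi> k)) = g"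
    using assms by auto
  have "homog w (0 + (\<Sum>k<card I. w (sorted_list_of_set I ! k, sorted_list_of_set J ! \<pi> k)))
     (of_int (sign \<pi>) * (\<Prod>k<card I. var_mp (sorted_list_of_set I ! k) (sorted_list_of_set J ! \<pi> k)))"
    by (intro homog_mult homog_of_int homog_prod[where g="\<lambda>k. w (sorted_list_of_set I ! k, sorted_list_of_set J ! \<pi> k)"] homog_var)
  then show "homog w g (of_int (sign \<pi>) * (\<Prod>k<card I. var_mp (sorted_list_of_set I ! k) (sorted_list_of_set J ! \<pi> k)))"
    using g by simp
qed

lemma sum_nth_distinct:
  assumes "distinct xs"
  shows "(\<Sum>k<length xs. (if xs ! k = i then 1 else 0)) = (if i \<in> set xs then (1::nat) else 0)"
proof (cases "i \<in> set xs")
  case True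
  then obtain k0 where k0: "k0 < length xs" "xs ! k0 = i" by (auto simp: in_set_conv_nth)
  have "(\<Sum>k<length xs. (if xs ! k = i then 1 else 0)) = (\<Sum>k\<in>{k0}. (if xs ! k = i then 1 else (0::nat)))"
    by (rule sum.mono_neutral_right) (use k0 assms in \<open>auto simp: nth_eq_iff_index_eq\<close>)
  then show ?thesis using True k0 by simp
next
  case False
  then have "\<And>k. k < length xs \<Longrightarrow> xs ! k \<noteq> i" by auto
  then show ?thesis using False by simp
qed

lemma homog_minor_row:
  assumes "finite I"
  shows "homog (\<lambda>(a,b). if a = i then 1 else 0) (if i \<in> I then 1 else 0) (minor I J)"
  by (rule homog_minor) (use sum_nth_distinct[of "sorted_list_of_set I" i] assms in auto)

lemma sum_perm_col:
  assumes "\<pi> permutes {0..<n}" "distinct xs" "length xs = n"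
  shows "(\<Sum>k<n. if xs ! \<pi> k = j then 1 else (0::nat)) = (if j \<in> set xs then 1 else 0)"
proof -
  have "(\<Sum>k<n. if xs ! \<pi> k = j then 1 else (0::nat)) = (\<Sum>k\<in>{0..<n}. ((\<lambda>k. if xs ! k = j then 1 else (0::nat)) \<circ> \<pi>) k)"
    by (simp add: lessThan_atLeast0)
  also have "\<dots> = (\<Sum>k\<in>{0..<n}. if xs ! k = j then 1 else (0::nat))"
    using sum.permute[OF assms(1), of "\<lambda>k. if xs ! k = j then 1 else (0::nat)"] by simp
  also have "\<dots> = (if j \<in> set xs then 1 else 0)"
    using sum_nth_distinct[OF assms(2), of j] assms(3) by (simp add: lessThan_atLeast0)
  finally show ?thesis .
qed

lemma homog_minor_col:
  assumes "finite J" "card J = card I"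
  shows "homog (\<lambda>(a,b). if b = j then 1 else 0) (if j \<in> J then 1 else 0) (minor I J)"
  by (rule homog_minor) (use sum_perm_col[of _ "card I" "sorted_list_of_set J" j] assms in simp)

lemma homog_minor_tot:
  shows "homog (\<lambda>_. 1) (card I) (minor I J)"
  by (rule homog_minor) simp

definition mpfilter :: "(('v \<Rightarrow>\<^sub>0 nat) \<Rightarrow> bool) \<Rightarrow> (('v \<Rightarrow>\<^sub>0 nat) \<Rightarrow>\<^sub>0 'a::comm_ring_1) \<Rightarrow> ('v \<Rightarrow>\<^sub>0 nat) \<Rightarrow>\<^sub>0 'a" where
  "mpfilter Q p = Poly_Mapping.mapp (\<lambda>\<mu> c. if Q \<mu> then c else 0) p"

lemma lookup_mpfilter: "Poly_Mapping.lookup (mpfilter Q p) \<mu> = (if Q \<mu> then Poly_Mapping.lookup p \<mu> else 0)"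
  by (auto simp: mpfilter_def lookup_mapp when_def in_keys_iff)

lemma keys_mpfilter: "Poly_Mapping.keys (mpfilter Q p) = {\<mu>\<in>Poly_Mapping.keys p. Q \<mu>}"
  by (auto simp: in_keys_iff lookup_mpfilter split: if_splits)

lemma mpfilter_add: "mpfilter Q (p + q) = mpfilter Q p + mpfilter Q q"
  by (rule poly_mapping_eqI) (simp add: lookup_mpfilter lookup_add)

lemma mpfilter_0[simp]: "mpfilter Q 0 = 0"
  by (rule poly_mapping_eqI) (simp add: lookup_mpfilter)

lemma mpfilter_sum: "mpfilter Q (sum f A) = (\<Sum>x\<in>A. mpfilter Q (f x))"
  by (induction A rule: infinite_finite_induct) (simp_all add: mpfilter_add)

lemma mpfilter_all: "(\<And>\<mu>. \<mu> \<in> Poly_Mapping.keys p \<Longrightarrow> Q \<mu>) \<Longrightarrow> mpfilter Q p = p"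
  by (rule poly_mapping_eqI) (auto simp: lookup_mpfilter in_keys_iff)

lemma mpfilter_none: "(\<And>\<mu>. \<mu> \<in> Poly_Mapping.keys p \<Longrightarrow> \<not> Q \<mu>) \<Longrightarrow> mpfilter Q p = 0"
  by (rule poly_mapping_eqI) (auto simp: lookup_mpfilter in_keys_iff)

lemma vpolys_mpfilter: "F \<in> vpolys Z \<Longrightarrow> mpfilter P F \<in> vpolys Z"
  by (simp add: vpolys_def keys_mpfilter)

lemma ev_superset:
  assumes "finite S" "Poly_Mapping.keys F \<subseteq> S"
  shows "ev \<sigma> F = (\<Sum>\<zeta>\<in>S. const_mp (Poly_Mapping.lookup F \<zeta>) * mono_ev \<sigma> \<zeta>)"
  unfolding ev_def
  by (rule sum.mono_neutral_left) (use assms in \<open>auto simp: in_keys_iff\<close>)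

lemma ev_mpfilter:
  "ev \<sigma> (mpfilter P F) = (\<Sum>\<zeta>\<in>Poly_Mapping.keys F. if P \<zeta> then const_mp (Poly_Mapping.lookup F \<zeta>) * mono_ev \<sigma> \<zeta> else 0)"
  by (subst ev_superset[of "Poly_Mapping.keys F"]) (auto simp: keys_mpfilter lookup_mpfilter intro!: sum.cong)

lemma keys_const_mult: "Poly_Mapping.keys (const_mp c * p) \<subseteq> Poly_Mapping.keys p"
proof
  fix \<mu> assume "\<mu> \<in> Poly_Mapping.keys (const_mp c * p)"
  with keys_mult[of "const_mp c" p] obtain a b where "\<mu> = a + b" "a \<in> Poly_Mapping.keys (const_mp c)" "b \<in> Poly_Mapping.keys p"
    by blast
  then show "\<mu> \<in> Poly_Mapping.keys p" by (auto simp: const_mp_def split: if_splits)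
qed

lemma filter_lemma:
  assumes QP: "\<And>\<zeta> \<mu>. \<zeta> \<in> Poly_Mapping.keys F \<Longrightarrow> \<mu> \<in> Poly_Mapping.keys (mono_ev vals \<zeta>) \<Longrightarrow> Q \<mu> = P \<zeta>"
  shows "mpfilter Q (ev vals F) = ev vals (mpfilter P F)"
proof -
  have "mpfilter Q (ev vals F) = (\<Sum>\<zeta>\<in>Poly_Mapping.keys F. mpfilter Q (const_mp (Poly_Mapping.lookup F \<zeta>) * mono_ev vals \<zeta>))"
    by (simp add: ev_def mpfilter_sum)
  also have "\<dots> = (\<Sum>\<zeta>\<in>Poly_Mapping.keys F. if P \<zeta> then const_mp (Poly_Mapping.lookup F \<zeta>) * mono_ev vals \<zeta> else 0)"
  proof (rule sum.cong[OF refl])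
    fix \<zeta> assume \<zeta>: "\<zeta> \<in> Poly_Mapping.keys F"
    show "mpfilter Q (const_mp (Poly_Mapping.lookup F \<zeta>) * mono_ev vals \<zeta>) =
      (if P \<zeta> then const_mp (Poly_Mapping.lookup F \<zeta>) * mono_ev vals \<zeta> else 0)"
    proof (cases "P \<zeta>")
      case True
      have "mpfilter Q (const_mp (Poly_Mapping.lookup F \<zeta>) * mono_ev vals \<zeta>) = const_mp (Poly_Mapping.lookup F \<zeta>) * mono_ev vals \<zeta>"
        by (rule mpfilter_all) (use QP[OF \<zeta>] keys_const_mult[of "Poly_Mapping.lookup F \<zeta>" "mono_ev vals \<zeta>"] True in blast)
      then show ?thesis using True by simp
    next
      case False
      have "mpfilter Q (const_mp (Poly_Mapping.lookup F \<zeta>) * mono_ev vals \<zeta>) = 0"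
        by (rule mpfilter_none) (use QP[OF \<zeta>] keys_const_mult[of "Poly_Mapping.lookup F \<zeta>" "mono_ev vals \<zeta>"] False in blast)
      then show ?thesis using False by simp
    qed
  qed
  also have "\<dots> = ev vals (mpfilter P F)" by (simp add: ev_mpfilter)
  finally show ?thesis .
qed

lemma ev_vanish:
  assumes "\<And>\<zeta> z. \<zeta> \<in> Poly_Mapping.keys F \<Longrightarrow> \<not> P \<zeta> \<Longrightarrow> \<exists>z\<in>Poly_Mapping.keys \<zeta>. \<sigma> z = 0"
  shows "ev \<sigma> F = ev \<sigma> (mpfilter P F)"
  unfolding ev_mpfilter ev_def[of \<sigma> F]
proof (rule sum.cong[OF refl])
  fix \<zeta> assume \<zeta>: "\<zeta> \<in> Poly_Mapping.keys F"
  show "const_mp (Poly_Mapping.lookup F \<zeta>) * mono_ev \<sigma> \<zeta> =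
    (if P \<zeta> then const_mp (Poly_Mapping.lookup F \<zeta>) * mono_ev \<sigma> \<zeta> else 0)"
  proof (cases "P \<zeta>")
    case False
    then obtain z where "z \<in> Poly_Mapping.keys \<zeta>" "\<sigma> z = 0" using assms \<zeta> by blast
    then have "mono_ev \<sigma> \<zeta> = 0" by (rule mono_ev_zero)
    then show ?thesis using False by simp
  qed simp
qed

lemma ev_scale_homog:
  assumes "\<And>\<zeta>. \<zeta> \<in> Poly_Mapping.keys G \<Longrightarrow> wdeg (\<lambda>_. 1) \<zeta> = d"
  shows "ev (\<lambda>z. c * \<sigma> z) G = c ^ d * ev \<sigma> G"
  unfolding ev_def sum_distrib_left
  by (rule sum.cong[OF refl]) (use assms in \<open>simp add: mono_ev_scale wdeg_def\<close>)

lemma decomp_deg: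
  "F = (\<Sum>d\<in>wdeg (\<lambda>_. 1) ` Poly_Mapping.keys F. mpfilter (\<lambda>\<zeta>. wdeg (\<lambda>_. 1) \<zeta> = d) F)"
proof (rule poly_mapping_eqI)
  fix \<zeta>
  show "Poly_Mapping.lookup F \<zeta> = Poly_Mapping.lookup (\<Sum>d\<in>wdeg (\<lambda>_. 1) ` Poly_Mapping.keys F. mpfilter (\<lambda>\<zeta>. wdeg (\<lambda>_. 1) \<zeta> = d) F) \<zeta>"
  proof (cases "\<zeta> \<in> Poly_Mapping.keys F")
    case True
    then show ?thesis
      by (simp add: lookup_sum lookup_mpfilter sum.delta)
  next
    case False
    then show ?thesis by (simp add: lookup_sum lookup_mpfilter in_keys_iff)
  qed
qed


lemma sorted_shift_up_list:
  assumes "finite L" "0 \<notin> L"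
  shows "sorted_list_of_set (shift_up v L) = [1..<v+1] @ map (\<lambda>l. l + v) (sorted_list_of_set L)"
proof -
  let ?xs = "sorted_list_of_set L"
  let ?l = "[1..<v+1] @ map (\<lambda>l. l + v) ?xs"
  have sx: "sorted_wrt (<) ?xs" by simp
  have pos: "\<And>x. x \<in> set ?xs \<Longrightarrow> 0 < x" using assms by (auto intro: gr0I)
  have s1: "sorted_wrt (<) (map (\<lambda>l. l + v) ?xs)"
    using sx by (simp add: sorted_wrt_map)
  have "sorted_wrt (<) ?l"
  proof -
    have "\<forall>x\<in>set [1..<v+1]. \<forall>y\<in>set (map (\<lambda>l. l + v) ?xs). x < y"
    proof (intro ballI)
      fix x y assume x: "x \<in> set [1..<v+1]" and y: "y \<in> set (map (\<lambda>l. l + v) ?xs)"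
      then obtain l where l: "l \<in> set ?xs" "y = l + v" by auto
      with pos have "0 < l" by blast
      then show "x < y" using x l(2) by (simp del: upt_Suc)
    qed
    then show ?thesis unfolding sorted_wrt_append using s1 by (simp del: upt_Suc)
  qed
  moreover have "set ?l = shift_up v L"
    using assms by (auto simp: shift_up_def)
  moreover have "length ?l = card (shift_up v L)"
  proof -
    have "card (shift_up v L) = card {1..v} + card ((\<lambda>l. l + v) ` L)"
      unfolding shift_up_def using assms by (intro card_Un_disjoint) auto
    also have "\<dots> = v + card L" by (simp add: card_image inj_on_def)
    finally show ?thesis by simp
  qed
  ultimately show ?thesis
    using sorted_list_of_set_unique[of "shift_up v L" ?l] assms
    by (simp add: shift_up_def)
qed

lemma card_shift_up: "finite L \<Longrightarrow> 0 \<notin> L \<Longrightarrow> card (shift_up v L) = v + card L"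
  using sorted_shift_up_list[of L v] length_sorted_list_of_set[of "shift_up v L"] by (simp del: upt_Suc)

lemma finite_shift_up: "finite L \<Longrightarrow> finite (shift_up v L)"
  by (simp add: shift_up_def)

lemma finite_shift_down: "finite I \<Longrightarrow> finite (shift_down v I)"
  by (simp add: shift_down_def)

lemma zero_notin_shift_down: "0 \<notin> shift_down v I"
  by (auto simp: shift_down_def)

lemma shift_up_down:
  assumes "{1..v} \<subseteq> I" "0 \<notin> I"
  shows "shift_up v (shift_down v I) = I"
proof -
  have eq: "\<forall>i\<in>{i \<in> I. v < i}. i - v + v = i" by auto
  have "(\<lambda>l. l + v) ` shift_down v I = (\<lambda>i. i - v + v) ` {i \<in> I. v < i}"
    unfolding shift_down_def image_image by simp
  also have "\<dots> = id ` {i \<in> I. v < i}"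
    by (rule image_cong[OF refl]) (use eq in simp)
  finally have 1: "(\<lambda>l. l + v) ` shift_down v I = {i \<in> I. v < i}" by simp
  have 2: "I = {1..v} \<union> {i \<in> I. v < i}"
  proof
    show "I \<subseteq> {1..v} \<union> {i \<in> I. v < i}"
    proof
      fix i assume i: "i \<in> I"
      with assms(2) have "0 < i" by (cases i) auto
      then show "i \<in> {1..v} \<union> {i \<in> I. v < i}" using i by (cases "v < i") auto
    qed
    show "{1..v} \<union> {i \<in> I. v < i} \<subseteq> I" using assms(1) by blast
  qed
  show ?thesis unfolding shift_up_def 1 using 2 by simp
qed

lemma shift_down_up:
  assumes "0 \<notin> L"
  shows "shift_down v (shift_up v L) = L"
proof -
  have 1: "{i \<in> shift_up v L. v < i} = (\<lambda>l. l + v) ` L"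
  proof
    show "{i \<in> shift_up v L. v < i} \<subseteq> (\<lambda>l. l + v) ` L"
      unfolding shift_up_def by auto
    show "(\<lambda>l. l + v) ` L \<subseteq> {i \<in> shift_up v L. v < i}"
    proof
      fix x assume "x \<in> (\<lambda>l. l + v) ` L"
      then obtain l where l: "l \<in> L" "x = l + v" by blast
      with assms have "0 < l" by (cases l) auto
      then show "x \<in> {i \<in> shift_up v L. v < i}" using l unfolding shift_up_def by auto
    qed
  qed
  show ?thesis unfolding shift_down_def 1 image_image by simp
qed

lemma sorted_good_list:
  assumes "finite I" "{1..v} \<subseteq> I" "0 \<notin> I"
  shows "sorted_list_of_set I = [1..<v+1] @ map (\<lambda>l. l + v) (sorted_list_of_set (shift_down v I))"
  using sorted_shift_up_list[of "shift_down v I" v] shift_up_down[OF assms(2,3)] assms(1)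
  by (simp add: finite_shift_down zero_notin_shift_down)

lemma card_shift_down:
  assumes "finite I" "{1..v} \<subseteq> I" "0 \<notin> I"
  shows "card (shift_down v I) + v = card I"
  using card_shift_up[of "shift_down v I" v] shift_up_down[OF assms(2,3)] assms(1)
  by (simp add: finite_shift_down zero_notin_shift_down)

lemma nth_good_list:
  assumes "xs = [1..<v+1] @ map (\<lambda>l. l + v) ys"
  shows "k < v \<Longrightarrow> xs ! k = k + 1" "v \<le> k \<Longrightarrow> k < v + length ys \<Longrightarrow> xs ! k = ys ! (k - v) + v"
  using assms by (auto simp: nth_append simp del: upt_Suc)

definition mxm :: "nat \<Rightarrow> (nat \<Rightarrow> nat) \<Rightarrow> (nat \<Rightarrow> nat) \<Rightarrow> 'a::comm_ring_1 mpoly mat" where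
  "mxm n r c = mat n n (\<lambda>(k,l). var_mp (r k) (c l))"

lemma minor_det: "minor I J = det (mxm (card I) (\<lambda>k. sorted_list_of_set I ! k) (\<lambda>l. sorted_list_of_set J ! l))"
  unfolding minor_def det_def mxm_def
  by (auto simp: lessThan_atLeast0 permutes_in_image intro!: sum.cong prod.cong)

lemma ev_det: "ev \<tau> (det (A :: 'a::comm_ring_1 mpoly mat)) = det (map_mat (ev \<tau>) A)"
  by (rule ev_hom.hom_det[symmetric])

lemma ev_minor:
  "ev \<tau> (minor I J) = det (mat (card I) (card I) (\<lambda>(k,l). \<tau> (sorted_list_of_set I ! k, sorted_list_of_set J ! l)))"
  unfolding minor_det ev_det
  by (rule arg_cong[where f=det]) (auto simp: mxm_def var_mp_def intro!: eq_matI)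


section \<open>Sylvester's identity\<close>

lemma block_schur:
  fixes A :: "'a::idom mat"
  assumes A: "A \<in> carrier_mat v v" and B: "B \<in> carrier_mat v s"
    and C: "C \<in> carrier_mat s v" and E: "E \<in> carrier_mat s s"
  shows "det A ^ s * det (four_block_mat A B C E) = det A * det (det A \<cdot>\<^sub>m E - C * adj_mat A * B)"
proof -
  let ?D = "det A"
  let ?P = "four_block_mat (1\<^sub>m v) (0\<^sub>m v s) (- (C * adj_mat A)) (?D \<cdot>\<^sub>m 1\<^sub>m s)"
  let ?N = "four_block_mat A B C E"
  have adj: "adj_mat A \<in> carrier_mat v v" "adj_mat A * A = ?D \<cdot>\<^sub>m 1\<^sub>m v"
    using adj_mat[OF A] by auto
  have CA: "C * adj_mat A \<in> carrier_mat s v" using C adj by auto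
  have P: "?P \<in> carrier_mat (v + s) (v + s)" by auto
  have N: "?N \<in> carrier_mat (v + s) (v + s)" using A E by auto
  have detP: "det ?P = ?D ^ s"
    by (subst det_four_block_mat_upper_right_zero[of _ v _ s]) (use CA in auto)
  have b3: "- (C * adj_mat A) * A + ?D \<cdot>\<^sub>m 1\<^sub>m s * C = 0\<^sub>m s v"
  proof -
    have "- (C * adj_mat A) * A = - (?D \<cdot>\<^sub>m C)"
    proof -
      have "(C * adj_mat A) * A = C * (adj_mat A * A)"
        using C adj A by (simp add: assoc_mult_mat[of C s v _ v A v])
      also have "\<dots> = ?D \<cdot>\<^sub>m C" using C adj(2) by (simp add: mult_smult_distrib[of C s v "1\<^sub>m v" v])
      finally have 1: "C * adj_mat A * A = ?D \<cdot>\<^sub>m C" .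
      have "- (C * adj_mat A) * A = - (C * adj_mat A * A)"
        by (rule uminus_mult_left_mat) (use CA A in auto)
      then show ?thesis using 1 by simp
    qed
    moreover have "?D \<cdot>\<^sub>m 1\<^sub>m s * C = ?D \<cdot>\<^sub>m C"
      using C by (simp add: mult_smult_assoc_mat[of "1\<^sub>m s" s s C v])
    ultimately show ?thesis using C by simp
  qed
  have b4: "- (C * adj_mat A) * B + ?D \<cdot>\<^sub>m 1\<^sub>m s * E = ?D \<cdot>\<^sub>m E - C * adj_mat A * B"
  proof -
    have "?D \<cdot>\<^sub>m 1\<^sub>m s * E = ?D \<cdot>\<^sub>m E"
      using E by (simp add: mult_smult_assoc_mat[of "1\<^sub>m s" s s E s])
    moreover have "- (C * adj_mat A) * B = - (C * adj_mat A * B)"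
      by (rule uminus_mult_left_mat) (use CA B in auto)
    moreover have "C * adj_mat A * B \<in> carrier_mat s s" using CA B by auto
    ultimately show ?thesis
      using E by (simp add: minus_add_uminus_mat[of "?D \<cdot>\<^sub>m E" s s "C * adj_mat A * B"] comm_add_mat[of _ s s])
  qed
  have prod: "?P * ?N = four_block_mat A B (0\<^sub>m s v) (?D \<cdot>\<^sub>m E - C * adj_mat A * B)"
  proof -
    have c: "1\<^sub>m v \<in> carrier_mat v v" "0\<^sub>m v s \<in> carrier_mat v s" "- (C * adj_mat A) \<in> carrier_mat s v"
      "?D \<cdot>\<^sub>m 1\<^sub>m s \<in> carrier_mat s s" using CA by auto
    show ?thesis
      unfolding mult_four_block_mat[OF c A B C E] b3 b4
      using A B by (simp add: left_mult_zero_mat[OF C] left_mult_zero_mat[OF E])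
  qed
  have "?D ^ s * det ?N = det (?P * ?N)"
    using det_mult[OF P N] detP by simp
  also have "\<dots> = ?D * det (?D \<cdot>\<^sub>m E - C * adj_mat A * B)"
    unfolding prod
    by (rule det_four_block_mat_lower_left_zero[OF A B refl]) (use CA B E in \<open>auto intro!: minus_carrier_mat\<close>)
  finally show ?thesis .
qed

lemma sylvester:
  fixes N :: "'a::idom mat"
  assumes N: "N \<in> carrier_mat (v + s) (v + s)" and s: "0 < s"
    and D: "det (mat v v (\<lambda>(i,j). N $$ (i,j))) \<noteq> 0"
  shows "det (mat s s (\<lambda>(a,b). det (mat (Suc v) (Suc v)
            (\<lambda>(i,j). N $$ (if i < v then i else v + a, if j < v then j else v + b)))))
         = det (mat v v (\<lambda>(i,j). N $$ (i,j))) ^ (s - 1) * det N"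
proof -
  define A0 where "A0 = mat v v (\<lambda>(i,j). N $$ (i,j))"
  define B0 where "B0 = mat v s (\<lambda>(i,j). N $$ (i, v + j))"
  define C0 where "C0 = mat s v (\<lambda>(i,j). N $$ (v + i, j))"
  define E0 where "E0 = mat s s (\<lambda>(i,j). N $$ (v + i, v + j))"
  let ?D = "det A0"
  define X where "X = ?D \<cdot>\<^sub>m E0 - C0 * adj_mat A0 * B0"
  have cars: "A0 \<in> carrier_mat v v" "B0 \<in> carrier_mat v s" "C0 \<in> carrier_mat s v" "E0 \<in> carrier_mat s s"
    by (simp_all add: A0_def B0_def C0_def E0_def)
  have adjc: "adj_mat A0 \<in> carrier_mat v v" using adj_mat[OF cars(1)] by simp
  have Nb: "N = four_block_mat A0 B0 C0 E0"
    by (rule eq_matI) (use N in \<open>auto simp: A0_def B0_def C0_def E0_def\<close>)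
  have entry: "det (mat (Suc v) (Suc v) (\<lambda>(i,j). N $$ (if i < v then i else v + a, if j < v then j else v + b)))
      = X $$ (a,b)" if ab: "a < s" "b < s" for a b
  proof -
    let ?bc = "mat v 1 (\<lambda>(i,_). B0 $$ (i,b))"
    let ?cr = "mat 1 v (\<lambda>(_,j). C0 $$ (a,j))"
    let ?e = "mat 1 1 (\<lambda>_. E0 $$ (a,b))"
    let ?M = "mat (Suc v) (Suc v) (\<lambda>(i,j). N $$ (if i < v then i else v + a, if j < v then j else v + b))"
    have M: "?M = four_block_mat A0 ?bc ?cr ?e"
      by (rule eq_matI) (use ab in \<open>auto simp: A0_def B0_def C0_def E0_def\<close>)
    have "?D ^ 1 * det ?M = ?D * det (?D \<cdot>\<^sub>m ?e - ?cr * adj_mat A0 * ?bc)"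
      unfolding M by (rule block_schur) (use cars in auto)
    moreover have "det (?D \<cdot>\<^sub>m ?e - ?cr * adj_mat A0 * ?bc) = X $$ (a,b)"
    proof -
      have r: "row (?cr * adj_mat A0) 0 = row (C0 * adj_mat A0) a"
        by (rule eq_vecI) (use ab cars adjc in \<open>auto simp: scalar_prod_def\<close>)
      have c: "col ?bc 0 = col B0 b"
        by (rule eq_vecI) (use ab cars in auto)
      have "det (?D \<cdot>\<^sub>m ?e - ?cr * adj_mat A0 * ?bc) = (?D \<cdot>\<^sub>m ?e - ?cr * adj_mat A0 * ?bc) $$ (0,0)"
        by (rule det_single) (use adjc in auto)
      also have "\<dots> = ?D * E0 $$ (a,b) - row (?cr * adj_mat A0) 0 \<bullet> col ?bc 0"
        using adjc by simp
      also have "\<dots> = X $$ (a,b)"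
      proof -
        have "(C0 * adj_mat A0 * B0) $$ (a,b) = row (C0 * adj_mat A0) a \<bullet> col B0 b"
          using ab cars adjc by (subst index_mult_mat(1)) auto
        then show ?thesis unfolding r c X_def using ab cars adjc by (simp del: assoc_mult_mat)
      qed
      finally show ?thesis .
    qed
    ultimately show ?thesis using D by (simp add: A0_def)
  qed
  have matX: "mat s s (\<lambda>(a,b). det (mat (Suc v) (Suc v)
            (\<lambda>(i,j). N $$ (if i < v then i else v + a, if j < v then j else v + b)))) = X"
    by (rule eq_matI) (use cars adjc in \<open>auto simp: entry X_def\<close>)
  have "?D ^ s * det N = ?D * det X"
    unfolding X_def Nb by (rule block_schur[OF cars])
  then have "?D * (?D ^ (s - 1) * det N) = ?D * det X"
    using s by (cases s) auto
  then show ?thesis using D matX by (simp add: A0_def)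
qed


lemma sorted_nth_in:
  assumes "finite I" "k < card I"
  shows "sorted_list_of_set I ! k \<in> I"
  using assms by (metis length_sorted_list_of_set nth_mem set_sorted_list_of_set)

lemma sorted_atLeastAtMost1: "sorted_list_of_set {1..v} = [1..<v+1]"
proof -
  have "{1..v} = {1..<v+1}" by auto
  then show ?thesis by simp
qed

lemma minor_diag_det: "minor {1..v} {1..v} = det (mat v v (\<lambda>(k,l). var_mp (k+1) (l+1)) :: 'a::comm_ring_1 mpoly mat)"
  unfolding minor_det sorted_atLeastAtMost1 mxm_def
  by (rule arg_cong[where f=det]) (auto intro!: eq_matI simp del: upt_Suc simp: nth_upt)

lemma minor_diag_ne0: "minor {1..v} {1..v} \<noteq> (0::'a::idom mpoly)"
proof
  assume 0: "minor {1..v} {1..v} = (0::'a mpoly)"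
  let ?d = "\<lambda>(i::nat, j::nat). if i = j then 1 else (0::'a mpoly)"
  have "ev ?d (minor {1..v} {1..v}) = det (mat v v (\<lambda>(k,l). ?d (sorted_list_of_set {1..v} ! k, sorted_list_of_set {1..v} ! l)))"
    using ev_minor[of ?d "{1..v}" "{1..v}"] by simp
  also have "mat v v (\<lambda>(k,l). ?d (sorted_list_of_set {1..v} ! k, sorted_list_of_set {1..v} ! l)) = 1\<^sub>m v"
    unfolding sorted_atLeastAtMost1 by (rule eq_matI) (auto simp del: upt_Suc simp: nth_upt)
  finally have "ev ?d (minor {1..v} {1..v}) = (1::'a mpoly)" by simp
  with 0 show False by simp
qed

definition tau_th :: "nat \<Rightarrow> nat \<times> nat \<Rightarrow> 'a::comm_ring_1 mpoly" where
  "tau_th v = (\<lambda>(i,j). if i \<le> v \<or> j \<le> v then (if i = j then 1 else 0) else var_mp (i - v) (j - v))"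

lemma ev_tau_th:
  assumes I: "finite I" "{1..v} \<subseteq> I" "0 \<notin> I" and J: "finite J" "{1..v} \<subseteq> J" "0 \<notin> J"
    and c: "card I = card J"
  shows "ev (tau_th v) (minor I J) = (minor (shift_down v I) (shift_down v J) :: 'a::idom mpoly)"
proof -
  let ?I' = "shift_down v I" and ?J' = "shift_down v J"
  let ?t = "card ?I'"
  have cI: "?t + v = card I" by (rule card_shift_down[OF I])
  have cJ: "card ?J' + v = card J" by (rule card_shift_down[OF J])
  have cJ': "card ?J' = ?t" using cI cJ c by simp
  have fI': "finite ?I'" "finite ?J'" using I J by (simp_all add: finite_shift_down)
  have sI: "sorted_list_of_set I = [1..<v+1] @ map (\<lambda>l. l + v) (sorted_list_of_set ?I')"
    by (rule sorted_good_list[OF I])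
  have sJ: "sorted_list_of_set J = [1..<v+1] @ map (\<lambda>l. l + v) (sorted_list_of_set ?J')"
    by (rule sorted_good_list[OF J])
  have posI: "0 < sorted_list_of_set ?I' ! k" if "k < ?t" for k
    using sorted_nth_in[OF fI'(1) that] zero_notin_shift_down[of v I] by (auto intro: gr0I)
  have posJ: "0 < sorted_list_of_set ?J' ! k" if "k < ?t" for k
    using sorted_nth_in[OF fI'(2), of k] that cJ' zero_notin_shift_down[of v J] by (auto intro: gr0I)
  have nI: "sorted_list_of_set I ! k = (if k < v then k + 1 else sorted_list_of_set ?I' ! (k - v) + v)"
    if "k < ?t + v" for k
    using nth_good_list[OF sI, of k] that fI' by (auto simp: not_less)
  have nJ: "sorted_list_of_set J ! k = (if k < v then k + 1 else sorted_list_of_set ?J' ! (k - v) + v)"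
    if "k < ?t + v" for k
    using nth_good_list[OF sJ, of k] that fI' cJ' by (auto simp: not_less)
  have M: "mat (card I) (card I) (\<lambda>(k,l). tau_th v (sorted_list_of_set I ! k, sorted_list_of_set J ! l))
     = four_block_mat (1\<^sub>m v) (0\<^sub>m v ?t) (0\<^sub>m ?t v) (mxm ?t (\<lambda>k. sorted_list_of_set ?I' ! k) (\<lambda>l. sorted_list_of_set ?J' ! l) :: 'a mpoly mat)"
  proof (rule eq_matI)
    fix k l assume "k < dim_row (four_block_mat (1\<^sub>m v) (0\<^sub>m v ?t) (0\<^sub>m ?t v) (mxm ?t (\<lambda>k. sorted_list_of_set ?I' ! k) (\<lambda>l. sorted_list_of_set ?J' ! l) :: 'a mpoly mat))"
      "l < dim_col (four_block_mat (1\<^sub>m v) (0\<^sub>m v ?t) (0\<^sub>m ?t v) (mxm ?t (\<lambda>k. sorted_list_of_set ?I' ! k) (\<lambda>l. sorted_list_of_set ?J' ! l) :: 'a mpoly mat))"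
    then have kl: "k < ?t + v" "l < ?t + v" by (auto simp: mxm_def)
    show "mat (card I) (card I) (\<lambda>(k,l). tau_th v (sorted_list_of_set I ! k, sorted_list_of_set J ! l)) $$ (k, l) =
      four_block_mat (1\<^sub>m v) (0\<^sub>m v ?t) (0\<^sub>m ?t v) (mxm ?t (\<lambda>k. sorted_list_of_set ?I' ! k) (\<lambda>l. sorted_list_of_set ?J' ! l)) $$ (k, l)"
    proof -
      have k: "k < card I" and l: "l < card I" using kl cI by auto
      let ?R = "four_block_mat (1\<^sub>m v) (0\<^sub>m v ?t) (0\<^sub>m ?t v) (mxm ?t (\<lambda>k. sorted_list_of_set ?I' ! k) (\<lambda>l. sorted_list_of_set ?J' ! l) :: 'a mpoly mat)"
      have R: "?R $$ (k,l) = (if k < v then if l < v then 1\<^sub>m v $$ (k,l) else 0 else if l < v then 0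
          else var_mp (sorted_list_of_set ?I' ! (k - v)) (sorted_list_of_set ?J' ! (l - v)))"
        using kl by (simp add: mxm_def)
      have L: "mat (card I) (card I) (\<lambda>(k,l). tau_th v (sorted_list_of_set I ! k, sorted_list_of_set J ! l)) $$ (k, l)
        = tau_th v (sorted_list_of_set I ! k, sorted_list_of_set J ! l)" using k l by simp
      consider (a) "k < v" "l < v" | (b) "k < v" "\<not> l < v" | (c) "\<not> k < v" "l < v" | (d) "\<not> k < v" "\<not> l < v"
        by blast
      then show ?thesis
      proof cases
        case a
        then have "sorted_list_of_set I ! k = k + 1" "sorted_list_of_set J ! l = l + 1"
          using nI[OF kl(1)] nJ[OF kl(2)] by simp_all
        then show ?thesis unfolding L using kl a by (simp add: tau_th_def mxm_def)
      next
        case b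
        then have "sorted_list_of_set I ! k = k + 1" "sorted_list_of_set J ! l = sorted_list_of_set ?J' ! (l - v) + v"
          using nI[OF kl(1)] nJ[OF kl(2)] by simp_all
        moreover have "0 < sorted_list_of_set ?J' ! (l - v)" using posJ[of "l - v"] kl b by simp
        ultimately show ?thesis unfolding L using kl b by (simp add: tau_th_def mxm_def)
      next
        case c
        then have "sorted_list_of_set I ! k = sorted_list_of_set ?I' ! (k - v) + v" "sorted_list_of_set J ! l = l + 1"
          using nI[OF kl(1)] nJ[OF kl(2)] by simp_all
        moreover have "0 < sorted_list_of_set ?I' ! (k - v)" using posI[of "k - v"] kl c by simp
        ultimately show ?thesis unfolding L using kl c by (simp add: tau_th_def mxm_def)
      next
        case d
        then have "sorted_list_of_set I ! k = sorted_list_of_set ?I' ! (k - v) + v"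
          "sorted_list_of_set J ! l = sorted_list_of_set ?J' ! (l - v) + v"
          using nI[OF kl(1)] nJ[OF kl(2)] by simp_all
        moreover have "0 < sorted_list_of_set ?I' ! (k - v)" using posI[of "k - v"] kl d by simp
        moreover have "0 < sorted_list_of_set ?J' ! (l - v)" using posJ[of "l - v"] kl d by simp
        ultimately show ?thesis unfolding L using kl d by (simp add: tau_th_def mxm_def)
      qed
    qed
  qed (use cI in \<open>auto simp: mxm_def\<close>)
  have "ev (tau_th v) (minor I J) = det (four_block_mat (1\<^sub>m v) (0\<^sub>m v ?t) (0\<^sub>m ?t v)
      (mxm ?t (\<lambda>k. sorted_list_of_set ?I' ! k) (\<lambda>l. sorted_list_of_set ?J' ! l) :: 'a mpoly mat))"
    unfolding ev_minor M ..
  also have "\<dots> = det (mxm ?t (\<lambda>k. sorted_list_of_set ?I' ! k) (\<lambda>l. sorted_list_of_set ?J' ! l) :: 'a mpoly mat)"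
    by (subst det_four_block_mat_lower_left_zero[of _ v _ ?t]) (auto simp: mxm_def)
  also have "\<dots> = minor ?I' ?J'" by (simp add: minor_det)
  finally show ?thesis .
qed

definition Ysub :: "nat \<Rightarrow> nat \<times> nat \<Rightarrow> 'a::comm_ring_1 mpoly" where
  "Ysub v = (\<lambda>(a,b). minor (shift_up v {a}) (shift_up v {b}))"

lemma sorted_su_single: "0 < x \<Longrightarrow> sorted_list_of_set (shift_up v {x}) = [1..<v+1] @ [x + v]"
  using sorted_shift_up_list[of "{x}" v] by simp

lemma ev_Y_minor:
  assumes L: "finite L" "0 \<notin> L" and M: "finite M" "0 \<notin> M"
    and c: "card L = s" "card M = s" and s: "0 < s"
  shows "ev (Ysub v) (minor L M) = minor {1..v} {1..v} ^ (s - 1) * (minor (shift_up v L) (shift_up v M) :: 'a::idom mpoly)"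
proof -
  let ?sL = "sorted_list_of_set L" and ?sM = "sorted_list_of_set M"
  let ?uL = "sorted_list_of_set (shift_up v L)" and ?uM = "sorted_list_of_set (shift_up v M)"
  have uL: "?uL = [1..<v+1] @ map (\<lambda>l. l + v) ?sL" by (rule sorted_shift_up_list[OF L])
  have uM: "?uM = [1..<v+1] @ map (\<lambda>l. l + v) ?sM" by (rule sorted_shift_up_list[OF M])
  have nL: "?uL ! k = (if k < v then k + 1 else ?sL ! (k - v) + v)" if "k < v + s" for k
    using nth_good_list[OF uL, of k] that c L by (auto simp: not_less)
  have nM: "?uM ! k = (if k < v then k + 1 else ?sM ! (k - v) + v)" if "k < v + s" for k
    using nth_good_list[OF uM, of k] that c M by (auto simp: not_less)
  have posL: "0 < ?sL ! a" if "a < s" for a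
    using sorted_nth_in[OF L(1), of a] that c L(2) by (auto intro: gr0I)
  have posM: "0 < ?sM ! a" if "a < s" for a
    using sorted_nth_in[OF M(1), of a] that c M(2) by (auto intro: gr0I)
  let ?N = "mxm (v + s) (\<lambda>k. ?uL ! k) (\<lambda>l. ?uM ! l) :: 'a mpoly mat"
  have N: "?N \<in> carrier_mat (v + s) (v + s)" by (simp add: mxm_def)
  have minN: "minor (shift_up v L) (shift_up v M) = det ?N"
    unfolding minor_det using card_shift_up[OF L, of v] c by simp
  have A0: "mat v v (\<lambda>(i,j). ?N $$ (i,j)) = mat v v (\<lambda>(k,l). var_mp (k+1) (l+1))"
    by (rule eq_matI) (auto simp: mxm_def nL nM)
  have D: "det (mat v v (\<lambda>(i,j). ?N $$ (i,j))) = minor {1..v} {1..v}"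
    unfolding A0 minor_diag_det ..
  have Bd: "det (mat (Suc v) (Suc v) (\<lambda>(i,j). ?N $$ (if i < v then i else v + a, if j < v then j else v + b)))
      = Ysub v (?sL ! a, ?sM ! b)" if ab: "a < s" "b < s" for a b
  proof -
    have su1: "sorted_list_of_set (shift_up v {?sL ! a}) = [1..<v+1] @ [?sL ! a + v]"
      by (rule sorted_su_single[OF posL[OF ab(1)]])
    have su2: "sorted_list_of_set (shift_up v {?sM ! b}) = [1..<v+1] @ [?sM ! b + v]"
      by (rule sorted_su_single[OF posM[OF ab(2)]])
    have cs: "card (shift_up v {?sL ! a}) = Suc v"
      using card_shift_up[of "{?sL ! a}" v] posL[OF ab(1)] by simp
    have "mat (Suc v) (Suc v) (\<lambda>(i,j). ?N $$ (if i < v then i else v + a, if j < v then j else v + b))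
      = mxm (Suc v) (\<lambda>k. sorted_list_of_set (shift_up v {?sL ! a}) ! k) (\<lambda>l. sorted_list_of_set (shift_up v {?sM ! b}) ! l)"
    proof (rule eq_matI)
      fix i j assume ij: "i < dim_row (mxm (Suc v) (\<lambda>k. sorted_list_of_set (shift_up v {?sL ! a}) ! k) (\<lambda>l. sorted_list_of_set (shift_up v {?sM ! b}) ! l) :: 'a mpoly mat)"
        "j < dim_col (mxm (Suc v) (\<lambda>k. sorted_list_of_set (shift_up v {?sL ! a}) ! k) (\<lambda>l. sorted_list_of_set (shift_up v {?sM ! b}) ! l) :: 'a mpoly mat)"
      then have ij': "i < Suc v" "j < Suc v" by (auto simp: mxm_def)
      have i1: "(if i < v then i else v + a) < v + s" "(if j < v then j else v + b) < v + s" using ij' ab by auto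
      have e1: "?uL ! (if i < v then i else v + a) = (if i < v then i + 1 else ?sL ! a + v)"
        using nL[OF i1(1)] by auto
      have e2: "?uM ! (if j < v then j else v + b) = (if j < v then j + 1 else ?sM ! b + v)"
        using nM[OF i1(2)] by auto
      have e3: "sorted_list_of_set (shift_up v {?sL ! a}) ! i = (if i < v then i + 1 else ?sL ! a + v)"
        unfolding su1 using ij' by (auto simp: nth_append simp del: upt_Suc)
      have e4: "sorted_list_of_set (shift_up v {?sM ! b}) ! j = (if j < v then j + 1 else ?sM ! b + v)"
        unfolding su2 using ij' by (auto simp: nth_append simp del: upt_Suc)
      show "mat (Suc v) (Suc v) (\<lambda>(i,j). ?N $$ (if i < v then i else v + a, if j < v then j else v + b)) $$ (i, j)
        = mxm (Suc v) (\<lambda>k. sorted_list_of_set (shift_up v {?sL ! a}) ! k) (\<lambda>l. sorted_list_of_set (shift_up v {?sM ! b}) ! l) $$ (i, j)"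
        using ij' i1 by (simp add: mxm_def e1 e2 e3 e4)
    qed (simp_all add: mxm_def)
    then show ?thesis by (simp add: Ysub_def minor_det cs)
  qed
  have "ev (Ysub v) (minor L M) = det (mat s s (\<lambda>(a,b). Ysub v (?sL ! a, ?sM ! b)))"
    unfolding ev_minor c(1) by (simp add: case_prod_beta)
  also have "mat s s (\<lambda>(a,b). Ysub v (?sL ! a, ?sM ! b)) = mat s s (\<lambda>(a,b). det (mat (Suc v) (Suc v)
            (\<lambda>(i,j). ?N $$ (if i < v then i else v + a, if j < v then j else v + b))))"
    by (rule eq_matI) (auto simp: Bd)
  also have "det \<dots> = det (mat v v (\<lambda>(i,j). ?N $$ (i,j))) ^ (s - 1) * det ?N"
    by (rule sylvester[OF N s]) (insert D minor_diag_ne0[of v, where 'a='a], simp)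
  finally show ?thesis using D minN by simp
qed

definition tau_pi :: "nat \<Rightarrow> nat \<Rightarrow> nat \<times> nat \<Rightarrow> 'a::comm_ring_1 mpoly" where
  "tau_pi p q = (\<lambda>(i,j). if i \<le> p \<and> j \<le> q then var_mp i j else 0)"

lemma ev_tau_pi_in:
  assumes "finite I" "finite J" "card J = card I" "I \<subseteq> {..p}" "J \<subseteq> {..q}"
  shows "ev (tau_pi p q) (minor I J) = minor I J"
proof -
  have "mat (card I) (card I) (\<lambda>(k,l). tau_pi p q (sorted_list_of_set I ! k, sorted_list_of_set J ! l))
    = (mxm (card I) (\<lambda>k. sorted_list_of_set I ! k) (\<lambda>l. sorted_list_of_set J ! l) :: 'a mpoly mat)"
  proof (rule eq_matI)
    fix k l assume "k < dim_row (mxm (card I) (\<lambda>k. sorted_list_of_set I ! k) (\<lambda>l. sorted_list_of_set J ! l) :: 'a mpoly mat)"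
      "l < dim_col (mxm (card I) (\<lambda>k. sorted_list_of_set I ! k) (\<lambda>l. sorted_list_of_set J ! l) :: 'a mpoly mat)"
    then have kl: "k < card I" "l < card J" using assms(3) by (auto simp: mxm_def)
    have "sorted_list_of_set I ! k \<le> p" "sorted_list_of_set J ! l \<le> q"
      using sorted_nth_in[OF assms(1) kl(1)] sorted_nth_in[OF assms(2) kl(2)] assms(4,5) by auto
    then show "mat (card I) (card I) (\<lambda>(k,l). tau_pi p q (sorted_list_of_set I ! k, sorted_list_of_set J ! l)) $$ (k, l)
      = (mxm (card I) (\<lambda>k. sorted_list_of_set I ! k) (\<lambda>l. sorted_list_of_set J ! l) :: 'a mpoly mat) $$ (k, l)"
      using kl assms(3) by (simp add: mxm_def tau_pi_def)
  qed (simp_all add: mxm_def)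
  then show ?thesis unfolding ev_minor by (simp add: minor_det)
qed

lemma ev_tau_pi_out:
  assumes "finite I" "finite J" "card J = card I" "\<not> (I \<subseteq> {..p} \<and> J \<subseteq> {..q})"
  shows "ev (tau_pi p q) (minor I J) = (0 :: 'a::comm_ring_1 mpoly)"
proof -
  let ?t = "card I"
  let ?A = "mat ?t ?t (\<lambda>(k,l). tau_pi p q (sorted_list_of_set I ! k, sorted_list_of_set J ! l)) :: 'a mpoly mat"
  have "(\<Prod>i = 0..<?t. ?A $$ (i, \<pi> i)) = 0" if \<pi>: "\<pi> permutes {0..<?t}" for \<pi>
  proof (rule prod_zero)
    from assms(4) consider (r) i where "i \<in> I" "\<not> i \<le> p" | (c) j where "j \<in> J" "\<not> j \<le> q" by auto
    then show "\<exists>k\<in>{0..<?t}. ?A $$ (k, \<pi> k) = 0"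
    proof cases
      case r
      have "i \<in> set (sorted_list_of_set I)" using r assms(1) by simp
      then obtain k where "k < length (sorted_list_of_set I)" "sorted_list_of_set I ! k = i"
        by (auto simp: in_set_conv_nth)
      then have k: "k < ?t" "sorted_list_of_set I ! k = i" by simp_all
      have "\<pi> k < ?t" using \<pi> k(1) permutes_in_image by fastforce
      then show ?thesis using k r by (intro bexI[of _ k]) (auto simp: tau_pi_def)
    next
      case c
      have "j \<in> set (sorted_list_of_set J)" using c assms(2) by simp
      then obtain l where "l < length (sorted_list_of_set J)" "sorted_list_of_set J ! l = j"
        by (auto simp: in_set_conv_nth)
      then have l: "l < ?t" "sorted_list_of_set J ! l = j" using assms(3) by simp_all
      define k where "k = inv_into UNIV \<pi> l"
      have "\<pi> k = l" unfolding k_def by (rule permutes_inverses(1)[OF \<pi>])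
      moreover have "k \<in> {0..<?t}" unfolding k_def
        using permutes_in_image[OF permutes_inv[OF \<pi>]] l(1) by simp
      ultimately have k: "k \<in> {0..<?t}" "\<pi> k = l" by simp_all
      then show ?thesis using k l c by (intro bexI[of _ k]) (auto simp: tau_pi_def)
    qed
  qed simp
  then have "det ?A = 0"
    unfolding det_def by simp
  then show ?thesis unfolding ev_minor .
qed


definition Zs :: "nat \<Rightarrow> nat \<Rightarrow> nat \<Rightarrow> (nat set \<times> nat set) set" where
  "Zs t m n = {(I,J). I \<subseteq> {1..m} \<and> J \<subseteq> {1..n} \<and> card I = t \<and> card J = t}"

definition mvals :: "nat set \<times> nat set \<Rightarrow> 'a::comm_ring_1 mpoly" where
  "mvals = (\<lambda>(I,J). minor I J)"

lemma A_alg_eq: "A_alg t m n = subalg (mvals ` Zs t m n)"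
proof -
  have "(minors t m n :: 'a::comm_ring_1 mpoly set) = mvals ` Zs t m n"
    unfolding minors_def mvals_def Zs_def by (auto simp: image_iff)
  then show ?thesis by (simp add: A_alg_def)
qed

lemma Zs_D:
  assumes "(I,J) \<in> Zs t m n"
  shows "finite I" "finite J" "0 \<notin> I" "0 \<notin> J" "card I = t" "card J = t" "I \<subseteq> {1..m}" "J \<subseteq> {1..n}"
  using assms unfolding Zs_def by (auto intro: finite_subset)

lemma minor_in_A: "(I,J) \<in> Zs t m n \<Longrightarrow> minor I J \<in> A_alg t m n"
  unfolding A_alg_eq by (rule subalg.gen) (force simp: mvals_def)

lemma sum_indicator_eq_iff:
  assumes "finite A" "\<And>z. z \<in> A \<Longrightarrow> 0 < f z"
  shows "(\<Sum>z\<in>A. f z * (if P z then 1 else 0)) = (\<Sum>z\<in>A. (f z :: nat)) \<longleftrightarrow> (\<forall>z\<in>A. P z)"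
proof
  assume eq: "(\<Sum>z\<in>A. f z * (if P z then 1 else 0)) = (\<Sum>z\<in>A. f z)"
  show "\<forall>z\<in>A. P z"
  proof (rule ccontr)
    assume "\<not> (\<forall>z\<in>A. P z)"
    then obtain z0 where "z0 \<in> A" "\<not> P z0" by blast
    then have "(\<Sum>z\<in>A. f z * (if P z then 1 else 0)) < (\<Sum>z\<in>A. f z)"
      using assms by (intro sum_strict_mono_ex1) (auto intro!: bexI[of _ z0])
    with eq show False by simp
  qed
qed simp

lemma minor_empty: "minor {} {} = (1 :: 'a::comm_ring_1 mpoly)"
  by (simp add: minor_def)

lemma homog_mvals_tot:
  assumes "z \<in> Zs t m n" shows "homog (\<lambda>_. 1) t (mvals z :: 'a::comm_ring_1 mpoly)"
proof (cases z)
  case (Pair I J)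
  with assms have "card I = t" by (auto dest: Zs_D)
  then show ?thesis using homog_minor_tot[of I J] Pair by (simp add: mvals_def)
qed

lemma homog_mvals_row:
  assumes "z \<in> Zs t m n"
  shows "homog (\<lambda>(a,b). if a = i then 1 else 0) (if i \<in> fst z then 1 else 0) (mvals z :: 'a::comm_ring_1 mpoly)"
proof (cases z)
  case (Pair I J)
  with assms have "finite I" by (auto dest: Zs_D)
  then show ?thesis using homog_minor_row[of I i J] Pair by (simp add: mvals_def)
qed

lemma homog_mvals_col:
  assumes "z \<in> Zs t m n"
  shows "homog (\<lambda>(a,b). if b = j then 1 else 0) (if j \<in> snd z then 1 else 0) (mvals z :: 'a::comm_ring_1 mpoly)"
proof (cases z)
  case (Pair I J)
  with assms have "finite J" "card J = card I" by (auto dest: Zs_D)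
  then show ?thesis using homog_minor_col[of J I j] Pair by (simp add: mvals_def)
qed

lemma theta_WD:
  assumes v: "0 < v" and vt: "v \<le> t"
  shows "WD (mvals :: _ \<Rightarrow> 'a::idom mpoly)
    (\<lambda>(I,J). if {1..v} \<subseteq> I \<and> {1..v} \<subseteq> J then minor (shift_down v I) (shift_down v J) else 0) (Zs t m n)"
  unfolding WD_def
proof safe
  let ?thv = "(\<lambda>(I,J). if {1..v} \<subseteq> I \<and> {1..v} \<subseteq> J then minor (shift_down v I) (shift_down v J) else 0) :: _ \<Rightarrow> 'a mpoly"
  fix F :: "((nat set \<times> nat set) \<Rightarrow>\<^sub>0 nat) \<Rightarrow>\<^sub>0 'a"
  assume F: "F \<in> vpolys (Zs t m n)" "ev mvals F = 0"
  have t: "0 < t" using v vt by simp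
  let ?good = "\<lambda>z::nat set \<times> nat set. {1..v} \<subseteq> fst z \<and> {1..v} \<subseteq> snd z"
  let ?P = "\<lambda>\<zeta>. \<forall>z\<in>Poly_Mapping.keys \<zeta>. ?good z"
  let ?Q = "\<lambda>\<mu>. (\<forall>i\<in>{1..v}. t * wdeg (\<lambda>(a,b). if a = i then 1 else 0) \<mu> = wdeg (\<lambda>_. 1) \<mu>) \<and>
                 (\<forall>j\<in>{1..v}. t * wdeg (\<lambda>(a,b). if b = j then 1 else 0) \<mu> = wdeg (\<lambda>_. 1) \<mu>)"
  have Zk: "z \<in> Zs t m n" if "\<zeta> \<in> Poly_Mapping.keys F" "z \<in> Poly_Mapping.keys \<zeta>" for \<zeta> z
    using F(1) that by (auto simp: vpolys_def)
  have QP: "?Q \<mu> = ?P \<zeta>" if \<zeta>: "\<zeta> \<in> Poly_Mapping.keys F" and \<mu>: "\<mu> \<in> Poly_Mapping.keys (mono_ev mvals \<zeta>)" for \<zeta> \<mu>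
  proof -
    have pos: "\<And>z. z \<in> Poly_Mapping.keys \<zeta> \<Longrightarrow> 0 < Poly_Mapping.lookup \<zeta> z"
      by (simp add: in_keys_iff)
    have tot: "wdeg (\<lambda>_. 1) \<mu> = (\<Sum>z\<in>Poly_Mapping.keys \<zeta>. Poly_Mapping.lookup \<zeta> z * t)"
      by (rule homogD[OF homog_mono_ev \<mu>]) (rule homog_mvals_tot[OF Zk[OF \<zeta>]])
    have row: "wdeg (\<lambda>(a,b). if a = i then 1 else 0) \<mu> =
        (\<Sum>z\<in>Poly_Mapping.keys \<zeta>. Poly_Mapping.lookup \<zeta> z * (if i \<in> fst z then 1 else 0))" for i
      by (rule homogD[OF homog_mono_ev \<mu>]) (rule homog_mvals_row[OF Zk[OF \<zeta>]])
    have col: "wdeg (\<lambda>(a,b). if b = j then 1 else 0) \<mu> =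
        (\<Sum>z\<in>Poly_Mapping.keys \<zeta>. Poly_Mapping.lookup \<zeta> z * (if j \<in> snd z then 1 else 0))" for j
      by (rule homogD[OF homog_mono_ev \<mu>]) (rule homog_mvals_col[OF Zk[OF \<zeta>]])
    have tot': "wdeg (\<lambda>_. 1) \<mu> = t * (\<Sum>z\<in>Poly_Mapping.keys \<zeta>. Poly_Mapping.lookup \<zeta> z)"
      unfolding tot by (simp add: sum_distrib_left mult.commute)
    have r: "t * wdeg (\<lambda>(a,b). if a = i then 1 else 0) \<mu> = wdeg (\<lambda>_. 1) \<mu> \<longleftrightarrow>
        (\<forall>z\<in>Poly_Mapping.keys \<zeta>. i \<in> fst z)" for i
      unfolding row tot' using t sum_indicator_eq_iff[of "Poly_Mapping.keys \<zeta>" "Poly_Mapping.lookup \<zeta>" "\<lambda>z. i \<in> fst z"] pos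
      by simp
    have c: "t * wdeg (\<lambda>(a,b). if b = j then 1 else 0) \<mu> = wdeg (\<lambda>_. 1) \<mu> \<longleftrightarrow>
        (\<forall>z\<in>Poly_Mapping.keys \<zeta>. j \<in> snd z)" for j
      unfolding col tot' using t sum_indicator_eq_iff[of "Poly_Mapping.keys \<zeta>" "Poly_Mapping.lookup \<zeta>" "\<lambda>z. j \<in> snd z"] pos
      by simp
    show ?thesis unfolding r c by blast
  qed
  have "ev ?thv F = ev ?thv (mpfilter ?P F)"
  proof (rule ev_vanish)
    fix \<zeta> assume "\<zeta> \<in> Poly_Mapping.keys F" "\<not> ?P \<zeta>"
    then obtain z where "z \<in> Poly_Mapping.keys \<zeta>" "\<not> ?good z" by blast
    then show "\<exists>z\<in>Poly_Mapping.keys \<zeta>. ?thv z = 0" by (intro bexI[of _ z]) (auto split: prod.splits)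
  qed
  also have "\<dots> = ev (\<lambda>z. ev (tau_th v) (mvals z)) (mpfilter ?P F)"
  proof (rule ev_cong)
    fix \<mu> x assume \<mu>: "\<mu> \<in> Poly_Mapping.keys (mpfilter ?P F)" and x: "x \<in> Poly_Mapping.keys \<mu>"
    from \<mu> have \<mu>': "\<mu> \<in> Poly_Mapping.keys F" "?P \<mu>" by (auto simp: keys_mpfilter)
    with x have g: "?good x" by blast
    have xZ: "x \<in> Zs t m n" by (rule Zk[OF \<mu>'(1) x])
    obtain I J where IJ: "x = (I,J)" by (cases x)
    from xZ IJ have "finite I" "0 \<notin> I" "finite J" "0 \<notin> J" "card I = card J" by (auto dest: Zs_D)
    with g IJ show "?thv x = ev (tau_th v) (mvals x)"
      by (simp add: mvals_def ev_tau_th)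
  qed
  also have "\<dots> = ev (tau_th v) (ev mvals (mpfilter ?P F))" by (simp add: ev_ev)
  also have "ev mvals (mpfilter ?P F) = mpfilter ?Q (ev mvals F)"
    by (rule filter_lemma[symmetric]) (rule QP)
  finally show "ev ?thv F = 0" using F(2) by simp
qed

lemma psi_WD:
  assumes s: "0 < s"
  shows "WD (mvals :: _ \<Rightarrow> 'a::idom mpoly) (\<lambda>(L,M). minor (shift_up v L) (shift_up v M)) (Zs s p q)"
  unfolding WD_def
proof safe
  let ?psv = "(\<lambda>(L,M). minor (shift_up v L) (shift_up v M)) :: _ \<Rightarrow> 'a mpoly"
  fix F :: "((nat set \<times> nat set) \<Rightarrow>\<^sub>0 nat) \<Rightarrow>\<^sub>0 'a"
  assume F: "F \<in> vpolys (Zs s p q)" "ev mvals F = 0"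
  let ?c = "minor {1..v} {1..v} ^ (s - 1) :: 'a mpoly"
  have c: "?c \<noteq> 0" using minor_diag_ne0[of v, where 'a='a] by simp
  have Zk: "z \<in> Zs s p q" if "\<zeta> \<in> Poly_Mapping.keys F" "z \<in> Poly_Mapping.keys \<zeta>" for \<zeta> z
    using F(1) that by (auto simp: vpolys_def)
  have each: "ev ?psv (mpfilter (\<lambda>\<zeta>. wdeg (\<lambda>_. 1) \<zeta> = d) F) = 0" for d
  proof -
    let ?Fd = "mpfilter (\<lambda>\<zeta>. wdeg (\<lambda>_. 1) \<zeta> = d) F"
    have "ev mvals ?Fd = mpfilter (\<lambda>\<mu>. wdeg (\<lambda>_. 1) \<mu> = s * d) (ev mvals F)"
    proof (rule filter_lemma[symmetric])
      fix \<zeta> \<mu> assume \<zeta>: "\<zeta> \<in> Poly_Mapping.keys F" and \<mu>: "\<mu> \<in> Poly_Mapping.keys (mono_ev mvals \<zeta>)"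
      have "wdeg (\<lambda>_. 1) \<mu> = (\<Sum>z\<in>Poly_Mapping.keys \<zeta>. Poly_Mapping.lookup \<zeta> z * s)"
        by (rule homogD[OF homog_mono_ev \<mu>]) (rule homog_mvals_tot[OF Zk[OF \<zeta>]])
      also have "\<dots> = s * wdeg (\<lambda>_. 1) \<zeta>"
        by (simp add: wdeg_def sum_distrib_left mult.commute)
      finally show "(wdeg (\<lambda>_. 1) \<mu> = s * d) = (wdeg (\<lambda>_. 1) \<zeta> = d)" using s by simp
    qed
    then have 0: "ev mvals ?Fd = 0" using F(2) by simp
    have "ev (Ysub v) (ev mvals ?Fd) = ev (\<lambda>z. ?c * ?psv z) ?Fd"
      unfolding ev_ev
    proof (rule ev_cong)
      fix \<mu> x assume \<mu>: "\<mu> \<in> Poly_Mapping.keys ?Fd" and x: "x \<in> Poly_Mapping.keys \<mu>"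
      from \<mu> have "\<mu> \<in> Poly_Mapping.keys F" by (simp add: keys_mpfilter)
      then have xZ: "x \<in> Zs s p q" using Zk x by blast
      obtain L M where LM: "x = (L,M)" by (cases x)
      from xZ LM have "finite L" "0 \<notin> L" "finite M" "0 \<notin> M" "card L = s" "card M = s" by (auto dest: Zs_D)
      then show "ev (Ysub v) (mvals x) = ?c * ?psv x"
        using LM s by (simp add: mvals_def ev_Y_minor)
    qed
    also have "\<dots> = ?c ^ d * ev ?psv ?Fd"
      by (rule ev_scale_homog) (simp add: keys_mpfilter)
    finally have z: "?c ^ d * ev ?psv ?Fd = 0" using 0 by simp
    have cd: "?c ^ d \<noteq> 0" using c by (rule power_not_zero)
    show ?thesis using z cd by (metis mult_eq_0_iff)
  qed
  have "ev ?psv F = ev ?psv (\<Sum>d\<in>wdeg (\<lambda>_. 1) ` Poly_Mapping.keys F. mpfilter (\<lambda>\<zeta>. wdeg (\<lambda>_. 1) \<zeta> = d) F)"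
    by (rule arg_cong[where f="ev ?psv"], rule decomp_deg)
  also have "\<dots> = (\<Sum>d\<in>wdeg (\<lambda>_. 1) ` Poly_Mapping.keys F. ev ?psv (mpfilter (\<lambda>\<zeta>. wdeg (\<lambda>_. 1) \<zeta> = d) F))"
    by (rule ev_sum)
  also have "\<dots> = 0" by (rule sum.neutral) (use each in blast)
  finally show "ev ?psv F = 0" .
qed


lemma alg_hom_id: "A \<subseteq> B \<Longrightarrow> alg_hom id A B"
  unfolding alg_hom_def by auto

lemma shift_down_0: "0 \<notin> I \<Longrightarrow> shift_down 0 I = I"
  unfolding shift_down_def by (auto intro: gr0I)

lemma shift_up_0: "shift_up 0 L = L"
  unfolding shift_up_def by simp

lemma A_zero_sub: "A_alg 0 p q \<subseteq> subalg {1 :: 'a::comm_ring_1 mpoly}"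
proof -
  have "minors 0 p q \<subseteq> {1 :: 'a mpoly}"
  proof
    fix x assume "x \<in> (minors 0 p q :: 'a mpoly set)"
    then obtain I J where "x = minor I J" "I \<subseteq> {1..p}" "J \<subseteq> {1..q}" "card I = 0" "card J = 0"
      unfolding minors_def by blast
    then have "I = {}" "J = {}" by (auto dest: finite_subset[OF _ finite_atLeastAtMost])
    then show "x \<in> {1}" using \<open>x = minor I J\<close> by (simp add: minor_empty)
  qed
  then show ?thesis unfolding A_alg_def by (rule subalg_mono[OF order.trans], auto intro: subalg.gen)
qed

lemma subalg_one_sub: "subalg {1} \<subseteq> subalg S"
  by (rule subalg_mono) simp

lemma retract_main:
  fixes m n t v :: nat
  assumes vt: "v \<le> t"
  shows "\<exists>\<theta> \<psi> :: 'a::idom mpoly \<Rightarrow> 'a mpoly.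
            alg_hom \<theta> (A_alg t m n) (A_alg (t - v) (m - v) (n - v))
          \<and> alg_hom \<psi> (A_alg (t - v) (m - v) (n - v)) (A_alg t m n)
          \<and> (\<forall>I J. I \<subseteq> {1..m} \<and> J \<subseteq> {1..n} \<and> card I = t \<and> card J = t \<longrightarrow>
                \<theta> (minor I J) = (if {1..v} \<subseteq> I \<and> {1..v} \<subseteq> J
                                  then minor (shift_down v I) (shift_down v J) else 0))
          \<and> (0 < t - v \<longrightarrow> (\<forall>L M. L \<subseteq> {1..m - v} \<and> M \<subseteq> {1..n - v} \<and> card L = t - v \<and> card M = t - v \<longrightarrow>
                \<psi> (minor L M) = minor (shift_up v L) (shift_up v M)))
          \<and> (\<forall>a \<in> A_alg (t - v) (m - v) (n - v). \<theta> (\<psi> a) = a)"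
proof (cases "v = 0")
  case True
  show ?thesis
  proof (intro exI[of _ id] conjI allI impI ballI)
    show "alg_hom id (A_alg t m n) (A_alg (t - v) (m - v) (n - v))"
      using True by (simp add: alg_hom_id)
    show "alg_hom id (A_alg (t - v) (m - v) (n - v)) (A_alg t m n)"
      using True by (simp add: alg_hom_id)
    fix I J assume "I \<subseteq> {1..m} \<and> J \<subseteq> {1..n} \<and> card I = t \<and> card J = t"
    then have "0 \<notin> I" "0 \<notin> J" by auto
    then show "id (minor I J :: 'a mpoly) = (if {1..v} \<subseteq> I \<and> {1..v} \<subseteq> J
                                  then minor (shift_down v I) (shift_down v J) else 0)"
      using True by (simp add: shift_down_0)
  next
    fix L M show "id (minor L M :: 'a mpoly) = minor (shift_up v L) (shift_up v M)"
      using True by (simp add: shift_up_0)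
  qed simp
next
  case False
  then have v: "0 < v" by simp
  define thv where "thv = (\<lambda>(I,J). if {1..v} \<subseteq> I \<and> {1..v} \<subseteq> J then minor (shift_down v I) (shift_down v J) else (0 :: 'a mpoly))"
  define \<theta> where "\<theta> = wdhom mvals thv (Zs t m n)"
  have wdth: "WD mvals thv (Zs t m n)" unfolding thv_def by (rule theta_WD[OF v vt])
  have thv_sub: "thv ` Zs t m n \<subseteq> A_alg (t - v) (m - v) (n - v)"
  proof
    fix x assume "x \<in> thv ` Zs t m n"
    then obtain I J where IJ: "(I,J) \<in> Zs t m n" "x = thv (I,J)" by auto
    show "x \<in> A_alg (t - v) (m - v) (n - v)"
    proof (cases "{1..v} \<subseteq> I \<and> {1..v} \<subseteq> J")
      case True
      have fin: "finite I" "finite J" "0 \<notin> I" "0 \<notin> J" "card I = t" "card J = t" "I \<subseteq> {1..m}" "J \<subseteq> {1..n}"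
        using Zs_D[OF IJ(1)] by auto
      have "card (shift_down v I) = t - v" "card (shift_down v J) = t - v"
        using card_shift_down[of I v] card_shift_down[of J v] fin True by auto
      moreover have "shift_down v K \<subseteq> {1..p - v}" if "K \<subseteq> {1..p}" for K p
      proof
        fix x assume "x \<in> shift_down v K"
        then obtain i where i: "i \<in> K" "v < i" "x = i - v" by (auto simp: shift_down_def)
        moreover have "i \<le> p" using that i(1) by auto
        ultimately show "x \<in> {1..p - v}" by auto
      qed
      then have "shift_down v I \<subseteq> {1..m - v}" "shift_down v J \<subseteq> {1..n - v}"
        using fin(7,8) by auto
      ultimately have "(shift_down v I, shift_down v J) \<in> Zs (t - v) (m - v) (n - v)"
        by (simp add: Zs_def)
      then show ?thesis using IJ(2) True by (simp add: thv_def minor_in_A)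
    next
      case False
      then have "thv (I,J) = 0" unfolding thv_def prod.case by (rule if_not_P)
      then have "x = 0" using IJ(2) by simp
      then show ?thesis by (simp add: A_alg_def)
    qed
  qed
  have th_hom: "alg_hom \<theta> (A_alg t m n) (A_alg (t - v) (m - v) (n - v))"
    unfolding \<theta>_def A_alg_eq[of t m n]
    by (rule alg_hom_target[OF wdhom_alg_hom[OF wdth]])
      (unfold A_alg_def, rule subalg_mono, use thv_sub in \<open>simp add: A_alg_def\<close>)
  have th_spec: "\<theta> (minor I J) = (if {1..v} \<subseteq> I \<and> {1..v} \<subseteq> J then minor (shift_down v I) (shift_down v J) else 0)"
    if "(I,J) \<in> Zs t m n" for I J
    using wdhom_gen[OF wdth that] by (simp add: \<theta>_def mvals_def thv_def)
  show ?thesis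
  proof (cases "t - v = 0")
    case True
    have sub: "A_alg (t - v) (m - v) (n - v) \<subseteq> (subalg {1} :: 'a mpoly set)"
      using True A_zero_sub by simp
    have idhom: "alg_hom id (subalg {1}) (A_alg t m n :: 'a mpoly set)"
      by (rule alg_hom_id) (simp add: A_alg_def subalg_one_sub)
    have ret: "\<theta> (id a) = a" if "a \<in> subalg {1}" for a
      by (rule retract_subalg[OF idhom th_hom _ _ that]) (simp_all add: A_alg_def alg_hom_one[OF th_hom])
    have psh: "alg_hom id (A_alg (t - v) (m - v) (n - v)) (A_alg t m n :: 'a mpoly set)"
    proof (rule alg_hom_id)
      have "subalg {1} \<subseteq> (A_alg t m n :: 'a mpoly set)"
        unfolding A_alg_def by (rule subalg_one_sub)
      then show "A_alg (t - v) (m - v) (n - v) \<subseteq> (A_alg t m n :: 'a mpoly set)" using sub by blast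
    qed
    have ths: "\<forall>I J. I \<subseteq> {1..m} \<and> J \<subseteq> {1..n} \<and> card I = t \<and> card J = t \<longrightarrow>
                \<theta> (minor I J) = (if {1..v} \<subseteq> I \<and> {1..v} \<subseteq> J
                                  then minor (shift_down v I) (shift_down v J) else 0)"
      by (intro allI impI th_spec) (simp add: Zs_def)
    have r2: "\<forall>a \<in> A_alg (t - v) (m - v) (n - v). \<theta> (id a) = a" using sub ret by blast
    show ?thesis
      apply (rule exI[of _ \<theta>], rule exI[of _ id])
      using th_hom psh ths r2 True by simp
  next
    case False
    define s where "s = t - v"
    have s: "0 < s" using False s_def by simp
    define psv where "psv = (\<lambda>(L,M). minor (shift_up v L) (shift_up v M) :: 'a mpoly)"
    define \<psi> where "\<psi> = wdhom mvals psv (Zs s (m - v) (n - v))"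
    have wdps: "WD mvals psv (Zs s (m - v) (n - v))" unfolding psv_def by (rule psi_WD[OF s])
    have up_Z: "(shift_up v L, shift_up v M) \<in> Zs t m n" if LM: "(L,M) \<in> Zs s (m - v) (n - v)" for L M
    proof -
      have fin: "finite L" "finite M" "0 \<notin> L" "0 \<notin> M" "card L = s" "card M = s" "L \<subseteq> {1..m - v}" "M \<subseteq> {1..n - v}"
        using Zs_D[OF LM] by auto
      obtain l where "l \<in> L" using fin(5) s by (metis card.empty equals0I less_irrefl)
      then have "l \<in> {1..m - v}" using fin(7) by blast
      then have "1 \<le> l \<and> l \<le> m - v" by simp
      then have "v < m" by arith
      obtain l' where "l' \<in> M" using fin(6) s by (metis card.empty equals0I less_irrefl)
      then have "l' \<in> {1..n - v}" using fin(8) by blast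
      then have "1 \<le> l' \<and> l' \<le> n - v" by simp
      then have "v < n" by arith
      have su_sub: "shift_up v K \<subseteq> {1..p}" if K: "K \<subseteq> {1..p - v}" and vp: "v < p" for K p
      proof
        fix x assume "x \<in> shift_up v K"
        then consider "x \<in> {1..v}" | k where "k \<in> K" "x = k + v" by (auto simp: shift_up_def)
        then show "x \<in> {1..p}"
        proof cases
          case 1 then show ?thesis using vp by auto
        next
          case (2 k)
          then have "k \<in> {1..p - v}" using K by blast
          then have "1 \<le> k \<and> k \<le> p - v" by simp
          then show ?thesis using 2 vp by simp arith
        qed
      qed
      have "shift_up v L \<subseteq> {1..m}" "shift_up v M \<subseteq> {1..n}"
        using su_sub fin(7,8) \<open>v < m\<close> \<open>v < n\<close> by auto
      moreover have "card (shift_up v L) = t" "card (shift_up v M) = t"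
        using card_shift_up[of L v] card_shift_up[of M v] fin s_def vt by auto
      ultimately show ?thesis by (simp add: Zs_def)
    qed
    have ps_hom: "alg_hom \<psi> (A_alg (t - v) (m - v) (n - v)) (A_alg t m n)"
      unfolding \<psi>_def s_def[symmetric] A_alg_eq[of s]
      by (rule alg_hom_target[OF wdhom_alg_hom[OF wdps]])
        (unfold A_alg_def, rule subalg_mono, use up_Z minor_in_A in \<open>force simp: psv_def A_alg_def\<close>)
    have ps_spec: "\<psi> (minor L M) = minor (shift_up v L) (shift_up v M)" if "(L,M) \<in> Zs s (m - v) (n - v)" for L M
      using wdhom_gen[OF wdps that] by (simp add: \<psi>_def mvals_def psv_def)
    have ps': "alg_hom \<psi> (subalg (mvals ` Zs s (m - v) (n - v))) (A_alg t m n :: 'a mpoly set)"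
      using ps_hom by (simp add: A_alg_eq s_def)
    have one: "1 \<in> (A_alg t m n :: 'a mpoly set)" by (simp add: A_alg_def)
    have gen: "\<theta> (\<psi> g) = g" if "g \<in> mvals ` Zs s (m - v) (n - v)" for g
    proof -
      from that obtain L M where LM: "(L,M) \<in> Zs s (m - v) (n - v)" "g = minor L M" by (auto simp: mvals_def)
      have "0 \<notin> L" "0 \<notin> M" using Zs_D[OF LM(1)] by auto
      moreover have "{1..v} \<subseteq> shift_up v L" "{1..v} \<subseteq> shift_up v M" by (auto simp: shift_up_def)
      ultimately show "\<theta> (\<psi> g) = g"
        using LM ps_spec[OF LM(1)] th_spec[OF up_Z[OF LM(1)]] by (simp add: shift_down_up)
    qed
    have ret: "\<forall>a \<in> A_alg (t - v) (m - v) (n - v). \<theta> (\<psi> a) = a"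
    proof
      fix a assume "a \<in> (A_alg (t - v) (m - v) (n - v) :: 'a mpoly set)"
      then have a: "a \<in> subalg (mvals ` Zs s (m - v) (n - v))" by (simp add: A_alg_eq s_def)
      show "\<theta> (\<psi> a) = a" by (rule retract_subalg[OF ps' th_hom one gen a])
    qed
    have ths: "\<forall>I J. I \<subseteq> {1..m} \<and> J \<subseteq> {1..n} \<and> card I = t \<and> card J = t \<longrightarrow>
                \<theta> (minor I J) = (if {1..v} \<subseteq> I \<and> {1..v} \<subseteq> J
                                  then minor (shift_down v I) (shift_down v J) else 0)"
      by (intro allI impI th_spec) (simp add: Zs_def)
    have pss: "0 < t - v \<longrightarrow> (\<forall>L M. L \<subseteq> {1..m - v} \<and> M \<subseteq> {1..n - v} \<and> card L = t - v \<and> card M = t - v \<longrightarrow>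
                \<psi> (minor L M) = minor (shift_up v L) (shift_up v M))"
      by (intro allI impI ps_spec) (simp add: Zs_def s_def)
    show ?thesis
      apply (rule exI[of _ \<theta>], rule exI[of _ \<psi>])
      using th_hom ps_hom ths pss ret by blast
  qed
qed


lemma pi_hom:
  assumes mm: "m' \<le> p" "n' \<le> q"
  shows "alg_hom (ev (tau_pi m' n')) (A_alg t' p q) (A_alg t' m' n' :: 'a::comm_ring_1 mpoly set)"
  unfolding alg_hom_def
proof (intro conjI ballI allI)
  fix x assume "x \<in> (A_alg t' p q :: 'a mpoly set)"
  then show "ev (tau_pi m' n') x \<in> A_alg t' m' n'"
    unfolding A_alg_def
  proof (induction x rule: subalg.induct)
    case (gen x)
    then obtain I J where IJ: "x = minor I J" "I \<subseteq> {1..p}" "J \<subseteq> {1..q}" "card I = t'" "card J = t'"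
      unfolding minors_def by blast
    have fin: "finite I" "finite J" using IJ(2,3) by (auto intro: finite_subset)
    show ?case
    proof (cases "I \<subseteq> {..m'} \<and> J \<subseteq> {..n'}")
      case True
      have "ev (tau_pi m' n') x = minor I J"
        unfolding IJ(1) by (rule ev_tau_pi_in) (use fin IJ True in auto)
      moreover have "I \<subseteq> {1..m'}" "J \<subseteq> {1..n'}" using True IJ(2,3) by (auto simp: subset_iff)
      ultimately show ?thesis using IJ unfolding minors_def by (auto intro!: subalg.gen)
    next
      case False
      have "ev (tau_pi m' n') x = 0"
        unfolding IJ(1) by (rule ev_tau_pi_out) (use fin IJ False in auto)
      then show ?thesis by simp
    qed
  next
    case (const c) then show ?case by (simp add: subalg.const)
  next
    case (add x y) then show ?case by (simp add: ev_add subalg.add)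
  next
    case (mult x y) then show ?case by (simp add: ev_mult subalg.mult)
  qed
qed (simp_all add: ev_add ev_mult)

lemma pi_id:
  assumes "a \<in> (A_alg t' m' n' :: 'a::comm_ring_1 mpoly set)"
  shows "ev (tau_pi m' n') a = a"
  using assms unfolding A_alg_def
proof (induction a rule: subalg.induct)
  case (gen x)
  then obtain I J where IJ: "x = minor I J" "I \<subseteq> {1..m'}" "J \<subseteq> {1..n'}" "card I = t'" "card J = t'"
    unfolding minors_def by blast
  have fin: "finite I" "finite J" using IJ(2,3) by (auto intro: finite_subset)
  show ?case unfolding IJ(1) by (rule ev_tau_pi_in) (use fin IJ in auto)
qed (simp_all add: ev_add ev_mult)

lemma A_alg_mono:
  assumes "m' \<le> p" "n' \<le> q"
  shows "A_alg t' m' n' \<subseteq> (A_alg t' p q :: 'a::comm_ring_1 mpoly set)"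
  unfolding A_alg_def
proof (rule subalg_mono)
  show "minors t' m' n' \<subseteq> subalg (minors t' p q :: 'a mpoly set)"
  proof
    fix x assume "x \<in> (minors t' m' n' :: 'a mpoly set)"
    then have "x \<in> minors t' p q" using assms unfolding minors_def by fastforce
    then show "x \<in> subalg (minors t' p q)" by (rule subalg.gen)
  qed
qed

theorem proposition5p2:
  fixes m n t v :: nat
  assumes "alg_closed TYPE('a::field_char_0)"
    and "m \<le> n" and "v \<le> t"
  shows "(\<exists>\<theta> \<psi> :: 'a mpoly \<Rightarrow> 'a mpoly.
            alg_hom \<theta> (A_alg t m n) (A_alg (t - v) (m - v) (n - v))
          \<and> alg_hom \<psi> (A_alg (t - v) (m - v) (n - v)) (A_alg t m n)
          \<and> (\<forall>I J. I \<subseteq> {1..m} \<and> J \<subseteq> {1..n} \<and> card I = t \<and> card J = t \<longrightarrow>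
                \<theta> (minor I J) = (if {1..v} \<subseteq> I \<and> {1..v} \<subseteq> J
                                  then minor (shift_down v I) (shift_down v J) else 0))
          \<and> (0 < t - v \<longrightarrow> (\<forall>L M. L \<subseteq> {1..m - v} \<and> M \<subseteq> {1..n - v} \<and> card L = t - v \<and> card M = t - v \<longrightarrow>
                \<psi> (minor L M) = minor (shift_up v L) (shift_up v M)))
          \<and> (\<forall>a \<in> A_alg (t - v) (m - v) (n - v). \<theta> (\<psi> a) = a))
       \<and> (\<forall>t' m' n' :: nat. t' \<le> t \<and> m' \<le> m \<and> n' \<le> n \<and> t - t' \<le> m - m' \<and> t - t' \<le> n - n' \<longrightarrow>
            (\<exists>\<iota> \<rho> :: 'a mpoly \<Rightarrow> 'a mpoly.
               alg_hom \<iota> (A_alg t' m' n') (A_alg t m n)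
             \<and> alg_hom \<rho> (A_alg t m n) (A_alg t' m' n')
             \<and> (\<forall>a \<in> A_alg t' m' n'. \<rho> (\<iota> a) = a)))"
proof (rule conjI)
  show "\<exists>\<theta> \<psi> :: 'a mpoly \<Rightarrow> 'a mpoly.
            alg_hom \<theta> (A_alg t m n) (A_alg (t - v) (m - v) (n - v))
          \<and> alg_hom \<psi> (A_alg (t - v) (m - v) (n - v)) (A_alg t m n)
          \<and> (\<forall>I J. I \<subseteq> {1..m} \<and> J \<subseteq> {1..n} \<and> card I = t \<and> card J = t \<longrightarrow>
                \<theta> (minor I J) = (if {1..v} \<subseteq> I \<and> {1..v} \<subseteq> J
                                  then minor (shift_down v I) (shift_down v J) else 0))
          \<and> (0 < t - v \<longrightarrow> (\<forall>L M. L \<subseteq> {1..m - v} \<and> M \<subseteq> {1..n - v} \<and> card L = t - v \<and> card M = t - v \<longrightarrow>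
                \<psi> (minor L M) = minor (shift_up v L) (shift_up v M)))
          \<and> (\<forall>a \<in> A_alg (t - v) (m - v) (n - v). \<theta> (\<psi> a) = a)"
    by (rule retract_main[OF assms(3)])
next
  show "\<forall>t' m' n' :: nat. t' \<le> t \<and> m' \<le> m \<and> n' \<le> n \<and> t - t' \<le> m - m' \<and> t - t' \<le> n - n' \<longrightarrow>
            (\<exists>\<iota> \<rho> :: 'a mpoly \<Rightarrow> 'a mpoly.
               alg_hom \<iota> (A_alg t' m' n') (A_alg t m n)
             \<and> alg_hom \<rho> (A_alg t m n) (A_alg t' m' n')
             \<and> (\<forall>a \<in> A_alg t' m' n'. \<rho> (\<iota> a) = a))"
  proof (intro allI impI)
    fix t' m' n' :: nat
    assume H: "t' \<le> t \<and> m' \<le> m \<and> n' \<le> n \<and> t - t' \<le> m - m' \<and> t - t' \<le> n - n'"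
    define w where "w = t - t'"
    have wt: "w \<le> t" and tw: "t - w = t'" using H by (auto simp: w_def)
    have mm: "m' \<le> m - w" "n' \<le> n - w" using H by (auto simp: w_def)
    obtain \<theta> \<psi> :: "'a mpoly \<Rightarrow> 'a mpoly" where
      th: "alg_hom \<theta> (A_alg t m n) (A_alg t' (m - w) (n - w))" and
      ps: "alg_hom \<psi> (A_alg t' (m - w) (n - w)) (A_alg t m n)" and
      ret: "\<forall>a \<in> A_alg t' (m - w) (n - w). \<theta> (\<psi> a) = a"
      using retract_main[OF wt, of m n, where 'a='a] unfolding tw by blast
    let ?\<pi> = "ev (tau_pi m' n') :: 'a mpoly \<Rightarrow> 'a mpoly"
    have sub: "A_alg t' m' n' \<subseteq> (A_alg t' (m - w) (n - w) :: 'a mpoly set)"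
      by (rule A_alg_mono[OF mm])
    have pih: "alg_hom ?\<pi> (A_alg t' (m - w) (n - w)) (A_alg t' m' n')"
      by (rule pi_hom[OF mm])
    show "\<exists>\<iota> \<rho> :: 'a mpoly \<Rightarrow> 'a mpoly.
               alg_hom \<iota> (A_alg t' m' n') (A_alg t m n)
             \<and> alg_hom \<rho> (A_alg t m n) (A_alg t' m' n')
             \<and> (\<forall>a \<in> A_alg t' m' n'. \<rho> (\<iota> a) = a)"
    proof -
      have h1: "alg_hom \<psi> (A_alg t' m' n') (A_alg t m n)" by (rule alg_hom_subset[OF ps sub])
      have h2: "alg_hom (?\<pi> \<circ> \<theta>) (A_alg t m n) (A_alg t' m' n')" by (rule alg_hom_comp[OF th pih])
      have h3: "\<forall>a \<in> A_alg t' m' n'. (?\<pi> \<circ> \<theta>) (\<psi> a) = a"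
      proof
        fix a assume a: "a \<in> (A_alg t' m' n' :: 'a mpoly set)"
        then have "\<theta> (\<psi> a) = a" using ret sub by blast
        then show "(?\<pi> \<circ> \<theta>) (\<psi> a) = a" using pi_id[OF a] by simp
      qed
      show ?thesis using h1 h2 h3 by blast
    qed
  qed
qed

end
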